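(* Let $n,d,p,q\ge 1$ be integers, $\mathcal T\in\bigotimes^d\mathbb R^n$, $\mathcal F\in\mathrm S^p\mathbb R^n$, $\mathcal G\in\mathrm S^q\mathbb R^n$. Then: (a) $\|\mathrm{sym}(\mathcal T)\|_{HS}\le\|\mathcal T\|_{HS}$, with equality if and only if $\mathrm{sym}(\mathcal T)=\mathcal T$. (b) $\langle\mathcal T,\otimes^d x\rangle=\langle\mathrm{sym}(\mathcal T),\otimes^d x\rangle$ for all $x\in\mathbb R^n$. (c) $\|\mathrm{sym}(\mathcal T)\|_\sigma\le\|\mathcal T\|_\sigma$, with equality if and only if there exists $x\in\mathbb R^n$, $\|x\|_2=1$, with $\|\mathcal T\|_\sigma=|\langle\mathcal T,\otimes^d x\rangle|$. (d) $\mathcal F\otimes_{\mathrm{sym}}\mathcal G=\mathrm{sym}(\mathcal F\otimes\mathcal G)$. (e) $\|\mathcal F\otimes_{\mathrm{sym}}\mathcal G\|_{HS}\le\|\mathcal F\|_{HS}\|\mathcal G\|_{HS}$, with equality if and only if either $\mathcal F=0$ or $\mathcal G=0$, or there exist $c\in\mathbb R^n\setminus\{0\}$ and $a,b\in\mathbb R\setminus\{0\}$ with $\mathcal F=a\otimes^p c$ and $\mathcal G=b\otimes^q c$. (f) Let $f(x)=\langle\mathcal F,\otimes^p x\rangle$ and $g(x)=\langle\mathcal G,\otimes^q x\rangle$. Then (i) $|f(c)|\le\|f\|_{HS}\|c\|_2^p$ for all $c\in\mathbb R^n$; for $c\ne0$ equality holds iff there is $a\in\mathbb R$ with $f(x)=a(c^\top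 x)^p$ for all $x$; (ii) $\|fg\|_{HS}\le\|f\|_{HS}\|g\|_{HS}$, with equality iff $f=0$ or $g=0$, or there exist $c\in\mathbb R^n\setminus\{0\}$, $a,b\in\mathbb R\setminus\{0\}$ with $f(x)=a(c^\top x)^p$ and $g(x)=b(c^\top x)^q$; (iii) $\|fg\|_\sigma\le\|f\|_\sigma\|g\|_\sigma$, with equality iff there is $x$ with $\|x\|_2=1$, $|f(x)|=\|f\|_\sigma$ and $|g(x)|=\|g\|_\sigma$; (iv) $\|f^k\|_\sigma=\|f\|_\sigma^k$ for every positive integer $k$.
   Context: For $\mathcal S=[s_{i_1,\dots,i_d}],\mathcal T=[t_{i_1,\dots,i_d}]\in\bigotimes_{j=1}^d\mathbb R^{n_j}$: $\langle\mathcal S,\mathcal T\rangle=\sum s_{i_1,\dots,i_d}t_{i_1,\dots,i_d}$, $\|\mathcal T\|_{HS}=\sqrt{\langle\mathcal T,\mathcal T\rangle}$, and the spectral norm $\|\mathcal T\|_\sigma=\max\{|\langle\mathcal T,x_1\otimes\cdots\otimes x_d\rangle|: x_j\in\mathbb R^{n_j},\|x_j\|_2=1\}$. $\otimes^d x=x\otimes\cdots\otimes x$ ($d$ times). $\mathrm S^d\mathbb R^n\subset\bigotimes^d\mathbb R^n$ is the subspace of symmetric tensors (entries invariant under permutation of indices). The symmetrization $\mathrm{sym}(\mathcal T)$ has entries $\frac1{d!}\sum_{\sigma\in\Sigma_d}t_{i_{\sigma(1)},\dots,i_{\sigma(d)}}$. Every real homogeneous polynomial $f$ of degree $p$ in $n$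 variables is $f(x)=\langle\mathcal F,\otimes^p x\rangle$ for a unique $\mathcal F\in\mathrm S^p\mathbb R^n$; one sets $\|f\|_{HS}:=\|\mathcal F\|_{HS}$ and $\|f\|_\sigma:=\|\mathcal F\|_\sigma$, and it holds that $\|f\|_\sigma=\max\{|f(x)|:\|x\|_2=1\}$. For $\mathcal F\in\mathrm S^p\mathbb R^n,\mathcal G\in\mathrm S^q\mathbb R^n$, $\mathcal F\otimes_{\mathrm{sym}}\mathcal G$ denotes the unique $\mathcal H\in\mathrm S^{p+q}\mathbb R^n$ with $\langle\mathcal H,\otimes^{p+q}x\rangle=\langle\mathcal F,\otimes^p x\rangle\langle\mathcal G,\otimes^q x\rangle$ for all $x$. *)

theory Defs
  imports "HOL-Analysis.Analysis"
begin

text \<open>Tensors of order d over R^n, with n = CARD('n).  A tensor is a function on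
index lists (multi-indices) 'n list, required to vanish off the lists of length d.
Vectors in R^n are elements of real^'n.\<close>

definition idx :: "nat \<Rightarrow> 'n::finite list set" where
  "idx d = {is. length is = d}"

definition is_tensor :: "nat \<Rightarrow> ('n::finite list \<Rightarrow> real) \<Rightarrow> bool" where
  "is_tensor d T \<longleftrightarrow> (\<forall>is. length is \<noteq> d \<longrightarrow> T is = 0)"

definition tinner :: "nat \<Rightarrow> ('n::finite list \<Rightarrow> real) \<Rightarrow> ('n list \<Rightarrow> real) \<Rightarrow> real" where
  "tinner d S T = (\<Sum>is\<in>idx d. S is * T is)"

definition hs_norm :: "nat \<Rightarrow> ('n::finite list \<Rightarrow> real) \<Rightarrow> real" where
  "hs_norm d T = sqrt (tinner d T T)"

definition tprod :: "(real^'n::finite) list \<Rightarrow> 'n list \<Rightarrow> real" where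
  "tprod xs is = (if length is = length xs then (\<Prod>j<length xs. (xs ! j) $ (is ! j)) else 0)"

definition tpow :: "nat \<Rightarrow> real^'n::finite \<Rightarrow> 'n list \<Rightarrow> real" where
  "tpow d x = tprod (replicate d x)"

definition spec_norm :: "nat \<Rightarrow> ('n::finite list \<Rightarrow> real) \<Rightarrow> real" where
  "spec_norm d T = Sup {\<bar>tinner d T (tprod xs)\<bar> | xs.
       length xs = d \<and> (\<forall>x\<in>set xs. norm x = 1)}"

definition perm_idx :: "(nat \<Rightarrow> nat) \<Rightarrow> 'a list \<Rightarrow> 'a list" where
  "perm_idx \<sigma> is = map (\<lambda>j. is ! \<sigma> j) [0..<length is]"

definition tsym :: "nat \<Rightarrow> ('n::finite list \<Rightarrow> real) \<Rightarrow> 'n list \<Rightarrow> real" where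
  "tsym d T is = (if length is = d then
      (1 / fact d) * (\<Sum>\<sigma>\<in>{\<sigma>. \<sigma> permutes {..<d}}. T (perm_idx \<sigma> is)) else 0)"

definition symmetric_tensor :: "nat \<Rightarrow> ('n::finite list \<Rightarrow> real) \<Rightarrow> bool" where
  "symmetric_tensor d T \<longleftrightarrow> is_tensor d T \<and>
     (\<forall>is \<sigma>. length is = d \<longrightarrow> \<sigma> permutes {..<d} \<longrightarrow> T (perm_idx \<sigma> is) = T is)"

definition ttensor :: "nat \<Rightarrow> nat \<Rightarrow> ('n::finite list \<Rightarrow> real) \<Rightarrow> ('n list \<Rightarrow> real) \<Rightarrow> 'n list \<Rightarrow> real" where
  "ttensor p q F G is = (if length is = p + q then F (take p is) * G (drop p is) else 0)"

definition sym_tensor_prod :: "nat \<Rightarrow> nat \<Rightarrow> ('n::finite list \<Rightarrow> real) \<Rightarrow> ('n list \<Rightarrow> real) \<Rightarrow> 'n list \<Rightarrow> real" where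
  "sym_tensor_prod p q F G = (THE H. symmetric_tensor (p + q) H \<and>
     (\<forall>x. tinner (p + q) H (tpow (p + q) x) = tinner p F (tpow p x) * tinner q G (tpow q x)))"

text \<open>Homogeneous polynomials of degree p are represented as functions
  f :: real^'n \<Rightarrow> real; their (unique) symmetric tensor and norms:\<close>
definition poly_tensor :: "nat \<Rightarrow> (real^'n::finite \<Rightarrow> real) \<Rightarrow> 'n list \<Rightarrow> real" where
  "poly_tensor p f = (THE F. symmetric_tensor p F \<and> (\<forall>x. f x = tinner p F (tpow p x)))"

definition poly_hs :: "nat \<Rightarrow> (real^'n::finite \<Rightarrow> real) \<Rightarrow> real" where
  "poly_hs p f = hs_norm p (poly_tensor p f)"

definition poly_sigma :: "nat \<Rightarrow> (real^'n::finite \<Rightarrow> real) \<Rightarrow> real" where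
  "poly_sigma p f = spec_norm p (poly_tensor p f)"

end

theory Submission
  imports Defs
begin


definition mprod :: "nat \<Rightarrow> (nat \<Rightarrow> real^'n::finite) \<Rightarrow> 'n list \<Rightarrow> real" where
  "mprod d f is = (\<Prod>j<d. f j $ (is ! j))"

definition mev :: "('n::finite list \<Rightarrow> real) \<Rightarrow> nat \<Rightarrow> (nat \<Rightarrow> real^'n) \<Rightarrow> real" where
  "mev T d f = (\<Sum>is\<in>idx d. T is * mprod d f is)"

lemma finite_idx[simp]: "finite (idx d :: 'n::finite list set)"
proof -
  have "idx d = {xs::'n list. set xs \<subseteq> UNIV \<and> length xs = d}" by (auto simp: idx_def)
  then show ?thesis using finite_lists_length_eq[of "UNIV::'n set" d] by simp
qed

lemma idx_iff[simp]: "is \<in> idx d \<longleftrightarrow> length is = d"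
  by (simp add: idx_def)

lemma tinner_tprod_map: "tinner d T (tprod (map f [0..<d])) = mev T d f"
  unfolding tinner_def mev_def
  by (rule sum.cong) (auto simp: tprod_def mprod_def intro!: prod.cong)

lemma tpow_map: "tpow d x = tprod (map (\<lambda>_. x) [0..<d])"
  by (simp add: tpow_def map_replicate_const)

lemma tinner_tpow: "tinner d T (tpow d x) = mev T d (\<lambda>_. x)"
  by (simp add: tpow_map tinner_tprod_map)

lemma tpow_eq: "tpow d x is = (if length is = d then (\<Prod>j<d. x $ (is ! j)) else 0)"
  by (simp add: tpow_def tprod_def)

lemma abs_mprod_le: "(\<And>j. j < d \<Longrightarrow> norm (f j) \<le> 1) \<Longrightarrow> \<bar>mprod d f is\<bar> \<le> 1"
  unfolding mprod_def abs_prod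
  by (rule prod_le_1) (meson component_le_norm_cart abs_ge_zero lessThan_iff order_trans)

lemma abs_mev_le: "(\<And>j. j < d \<Longrightarrow> norm (f j) \<le> 1) \<Longrightarrow> \<bar>mev T d f\<bar> \<le> (\<Sum>is\<in>idx d. \<bar>T is\<bar>)"
proof -
  assume a: "\<And>j. j < d \<Longrightarrow> norm (f j) \<le> 1"
  have "\<bar>mev T d f\<bar> \<le> (\<Sum>is\<in>idx d. \<bar>T is * mprod d f is\<bar>)"
    unfolding mev_def by (rule sum_abs)
  also have "\<dots> \<le> (\<Sum>is\<in>idx d. \<bar>T is\<bar>)"
    apply (rule sum_mono)
    using abs_mprod_le[OF a] by (simp add: abs_mult mult_left_le)
  finally show ?thesis .
qed

definition SN :: "('n::finite list \<Rightarrow> real) \<Rightarrow> nat \<Rightarrow> real set" where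
  "SN T d = {\<bar>mev T d f\<bar> | f. \<forall>j<d. norm (f j) = 1}"

lemma spec_norm_SN: "spec_norm d T = Sup (SN T d)"
proof -
  have "{\<bar>tinner d T (tprod xs)\<bar> | xs. length xs = d \<and> (\<forall>x\<in>set xs. norm x = 1)} = SN T d"
  proof (intro set_eqI iffI)
    fix r assume "r \<in> {\<bar>tinner d T (tprod xs)\<bar> | xs. length xs = d \<and> (\<forall>x\<in>set xs. norm x = 1)}"
    then obtain xs where xs: "r = \<bar>tinner d T (tprod xs)\<bar>" "length xs = d" "\<forall>x\<in>set xs. norm x = 1" by auto
    have "map ((!) xs) [0..<d] = xs" using xs(2) map_nth by blast
    then have "r = \<bar>mev T d ((!) xs)\<bar>" using xs(1) tinner_tprod_map by metis
    moreover have "\<forall>j<d. norm (xs ! j) = 1" using xs by auto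
    ultimately show "r \<in> SN T d" unfolding SN_def by blast
  next
    fix r assume "r \<in> SN T d"
    then obtain f where f: "r = \<bar>mev T d f\<bar>" "\<forall>j<d. norm (f j) = 1" unfolding SN_def by auto
    then show "r \<in> {\<bar>tinner d T (tprod xs)\<bar> | xs. length xs = d \<and> (\<forall>x\<in>set xs. norm x = 1)}"
      by (intro CollectI exI[of _ "map f [0..<d]"]) (auto simp: tinner_tprod_map)
  qed
  then show ?thesis unfolding spec_norm_def by simp
qed

lemma SN_bdd: "bdd_above (SN T d)"
  unfolding SN_def by (rule bdd_aboveI[of _ "\<Sum>is\<in>idx d. \<bar>T is\<bar>"]) (auto intro!: abs_mev_le)

lemma SN_ne: "SN T d \<noteq> {}"
  unfolding SN_def by (auto intro!: exI[of _ "\<lambda>_. axis undefined 1"])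

lemma spec_ge: "(\<And>j. j < d \<Longrightarrow> norm (f j) = 1) \<Longrightarrow> \<bar>mev T d f\<bar> \<le> spec_norm d T"
  unfolding spec_norm_SN by (rule cSup_upper[OF _ SN_bdd]) (auto simp: SN_def)

lemma spec_le: "(\<And>f. (\<forall>j<d. norm (f j) = 1) \<Longrightarrow> \<bar>mev T d f\<bar> \<le> M) \<Longrightarrow> spec_norm d T \<le> M"
  unfolding spec_norm_SN by (rule cSup_least[OF SN_ne]) (auto simp: SN_def)

lemma spec_nonneg: "spec_norm d T \<ge> 0"
  using spec_ge[of d "\<lambda>_. axis undefined 1" T] by (auto intro: order_trans[OF abs_ge_zero])

lemma spec_tpow_ge: "norm x = 1 \<Longrightarrow> \<bar>tinner d T (tpow d x)\<bar> \<le> spec_norm d T"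
  by (simp add: tinner_tpow spec_ge)

lemma length_perm_idx[simp]: "length (perm_idx \<sigma> is) = length is"
  by (simp add: perm_idx_def)

lemma nth_perm_idx[simp]: "j < length is \<Longrightarrow> perm_idx \<sigma> is ! j = is ! \<sigma> j"
  by (simp add: perm_idx_def)

lemma perm_idx_comp:
  assumes "\<sigma> permutes {..<length is}"
  shows "perm_idx \<sigma> (perm_idx \<tau> is) = perm_idx (\<tau> \<circ> \<sigma>) is"
proof -
  have "\<sigma> j < length is" if "j < length is" for j
    using permutes_in_image[OF assms] that by auto
  then show ?thesis by (intro nth_equalityI) auto
qed

lemma perm_idx_id: "perm_idx id is = is"
  by (intro nth_equalityI) auto

lemma perm_idx_inv1:
  assumes "\<sigma> permutes {..<length is}"
  shows "perm_idx \<sigma> (perm_idx (inv \<sigma>) is) = is"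
  using perm_idx_comp[OF assms] permutes_inv_o[OF assms] perm_idx_id by metis

lemma perm_idx_inv2:
  assumes "\<sigma> permutes {..<length is}"
  shows "perm_idx (inv \<sigma>) (perm_idx \<sigma> is) = is"
proof -
  have "inv \<sigma> permutes {..<length is}" using assms permutes_inv by blast
  then show ?thesis using perm_idx_comp permutes_inv_o[OF assms] perm_idx_id by metis
qed

lemma sum_idx_perm:
  assumes "\<sigma> permutes {..<d}"
  shows "(\<Sum>is\<in>idx d. h (perm_idx \<sigma> is)) = (\<Sum>is\<in>idx d. h is)"
proof -
  have "bij_betw (perm_idx \<sigma>) (idx d) (idx d)"
  proof (rule bij_betw_byWitness[where f'="perm_idx (inv \<sigma>)"])
    show "\<forall>a\<in>idx d. perm_idx (inv \<sigma>) (perm_idx \<sigma> a) = a" using perm_idx_inv2 assms by auto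
    show "\<forall>a\<in>idx d. perm_idx \<sigma> (perm_idx (inv \<sigma>) a) = a" using perm_idx_inv1 assms by auto
  qed auto
  then show ?thesis by (rule sum.reindex_bij_betw)
qed

lemma mprod_comp:
  assumes "\<sigma> permutes {..<d}" "length is = d"
  shows "mprod d (f \<circ> \<sigma>) is = mprod d f (perm_idx (inv \<sigma>) is)"
proof -
  have b: "bij_betw \<sigma> {..<d} {..<d}" using assms(1) permutes_imp_bij by blast
  have "mprod d (f \<circ> \<sigma>) is = (\<Prod>j<d. (\<lambda>k. f k $ (is ! inv \<sigma> k)) (\<sigma> j))"
    unfolding mprod_def by (simp add: permutes_inverses(2)[OF assms(1)])
  also have "\<dots> = (\<Prod>k<d. f k $ (is ! inv \<sigma> k))"
    by (rule prod.reindex_bij_betw[OF b])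
  also have "\<dots> = mprod d f (perm_idx (inv \<sigma>) is)"
    unfolding mprod_def using assms(2) by (intro prod.cong) auto
  finally show ?thesis .
qed

lemma mev_comp:
  assumes "\<sigma> permutes {..<d}"
  shows "mev T d (f \<circ> \<sigma>) = (\<Sum>js\<in>idx d. T (perm_idx \<sigma> js) * mprod d f js)"
proof -
  have "mev T d (f \<circ> \<sigma>) = (\<Sum>is\<in>idx d. T is * mprod d f (perm_idx (inv \<sigma>) is))"
    unfolding mev_def using mprod_comp[OF assms] by (intro sum.cong) auto
  also have "\<dots> = (\<Sum>js\<in>idx d. T (perm_idx \<sigma> js) * mprod d f (perm_idx (inv \<sigma>) (perm_idx \<sigma> js)))"
    using sum_idx_perm[OF assms, of "\<lambda>is. T is * mprod d f (perm_idx (inv \<sigma>) is)"] by simp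
  also have "\<dots> = (\<Sum>js\<in>idx d. T (perm_idx \<sigma> js) * mprod d f js)"
  proof (intro sum.cong refl)
    fix js :: "'a list" assume "js \<in> idx d"
    then have "\<sigma> permutes {..<length js}" using assms by simp
    then show "T (perm_idx \<sigma> js) * mprod d f (perm_idx (inv \<sigma>) (perm_idx \<sigma> js)) = T (perm_idx \<sigma> js) * mprod d f js"
      using perm_idx_inv2 by metis
  qed
  finally show ?thesis .
qed

lemma mev_sym_comp:
  assumes "symmetric_tensor d S" "\<sigma> permutes {..<d}"
  shows "mev S d (f \<circ> \<sigma>) = mev S d f"
proof -
  have "mev S d (f \<circ> \<sigma>) = (\<Sum>js\<in>idx d. S (perm_idx \<sigma> js) * mprod d f js)"
    by (rule mev_comp[OF assms(2)])
  also have "\<dots> = mev S d f" unfolding mev_def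
  proof (intro sum.cong refl)
    fix js :: "'a list" assume "js \<in> idx d"
    then show "S (perm_idx \<sigma> js) * mprod d f js = S js * mprod d f js"
      using assms unfolding symmetric_tensor_def by simp
  qed
  finally show ?thesis .
qed

lemma mev_tsym:
  "mev (tsym d T) d f = (1 / fact d) * (\<Sum>\<sigma>\<in>{\<sigma>. \<sigma> permutes {..<d}}. mev T d (f \<circ> \<sigma>))"
proof -
  have "mev (tsym d T) d f = (\<Sum>is\<in>idx d. (1 / fact d) * (\<Sum>\<sigma>\<in>{\<sigma>. \<sigma> permutes {..<d}}. T (perm_idx \<sigma> is) * mprod d f is))"
    unfolding mev_def tsym_def by (intro sum.cong) (auto simp: sum_distrib_right)
  also have "\<dots> = (1 / fact d) * (\<Sum>\<sigma>\<in>{\<sigma>. \<sigma> permutes {..<d}}. \<Sum>is\<in>idx d. T (perm_idx \<sigma> is) * mprod d f is)"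
    by (simp add: sum_divide_distrib[symmetric] sum.swap[of _ "idx d"])
  also have "\<dots> = (1 / fact d) * (\<Sum>\<sigma>\<in>{\<sigma>. \<sigma> permutes {..<d}}. mev T d (f \<circ> \<sigma>))"
    by (simp add: mev_comp)
  finally show ?thesis .
qed

lemma tinner_tsym:
  "tinner d (tsym d T) S = tinner d T (tsym d S)"
proof -
  let ?P = "{\<sigma>. \<sigma> permutes {..<d}}"
  have "tinner d (tsym d T) S = (1 / fact d) * (\<Sum>\<sigma>\<in>?P. \<Sum>is\<in>idx d. T (perm_idx \<sigma> is) * S is)"
    unfolding tinner_def tsym_def
    by (simp add: sum_distrib_right sum_distrib_left sum.swap[of _ "idx d"] mult.assoc)
  also have "\<dots> = (1 / fact d) * (\<Sum>\<sigma>\<in>?P. \<Sum>is\<in>idx d. T is * S (perm_idx (inv \<sigma>) is))"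
  proof -
    have "(\<Sum>is\<in>idx d. T (perm_idx \<sigma> is) * S is) = (\<Sum>is\<in>idx d. T is * S (perm_idx (inv \<sigma>) is))"
      if "\<sigma> \<in> ?P" for \<sigma>
    proof -
      have i: "inv \<sigma> permutes {..<d}" using that permutes_inv by blast
      have "(\<Sum>is\<in>idx d. T (perm_idx \<sigma> is) * S is) =
            (\<Sum>is\<in>idx d. T (perm_idx \<sigma> (perm_idx (inv \<sigma>) is)) * S (perm_idx (inv \<sigma>) is))"
        using sum_idx_perm[OF i, of "\<lambda>is. T (perm_idx \<sigma> is) * S is"] by simp
      also have "\<dots> = (\<Sum>is\<in>idx d. T is * S (perm_idx (inv \<sigma>) is))"
      proof (intro sum.cong refl)
        fix js :: "'a list" assume "js \<in> idx d"
        then have "\<sigma> permutes {..<length js}" using that by simp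
        then show "T (perm_idx \<sigma> (perm_idx (inv \<sigma>) js)) * S (perm_idx (inv \<sigma>) js) = T js * S (perm_idx (inv \<sigma>) js)"
          using perm_idx_inv1 by metis
      qed
      finally show ?thesis .
    qed
    then show ?thesis by simp
  qed
  also have "\<dots> = (1 / fact d) * (\<Sum>\<sigma>\<in>?P. \<Sum>is\<in>idx d. T is * S (perm_idx \<sigma> is))"
  proof -
    have "(\<Sum>\<sigma>\<in>?P. \<Sum>is\<in>idx d. T is * S (perm_idx \<sigma> is)) = (\<Sum>\<sigma>\<in>?P. \<Sum>is\<in>idx d. T is * S (perm_idx (inv \<sigma>) is))"
      by (rule sum_permutations_inverse)
    then show ?thesis by simp
  qed
  also have "\<dots> = tinner d T (tsym d S)"
    unfolding tinner_def tsym_def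
    by (simp add: sum_distrib_right sum_distrib_left sum.swap[of _ "idx d"] mult.assoc mult.left_commute)
  finally show ?thesis .
qed

lemma tsym_symmetric: "symmetric_tensor d (tsym d T)"
  unfolding symmetric_tensor_def is_tensor_def
proof (intro conjI allI impI)
  fix ks \<tau> assume l: "length (ks::'a list) = d" and t: "\<tau> permutes {..<d}"
  have "(\<Sum>\<sigma>\<in>{\<sigma>. \<sigma> permutes {..<d}}. T (perm_idx \<sigma> (perm_idx \<tau> ks))) =
        (\<Sum>\<sigma>\<in>{\<sigma>. \<sigma> permutes {..<d}}. T (perm_idx (\<tau> \<circ> \<sigma>) ks))"
  proof (intro sum.cong refl)
    fix \<sigma> assume "\<sigma> \<in> {\<sigma>. \<sigma> permutes {..<d}}"
    then have "\<sigma> permutes {..<length ks}" using l by simp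
    then show "T (perm_idx \<sigma> (perm_idx \<tau> ks)) = T (perm_idx (\<tau> \<circ> \<sigma>) ks)"
      using perm_idx_comp by metis
  qed
  also have "\<dots> = (\<Sum>\<sigma>\<in>{\<sigma>. \<sigma> permutes {..<d}}. T (perm_idx \<sigma> ks))"
    using setum_permutations_compose_left[OF t, of "\<lambda>\<sigma>. T (perm_idx \<sigma> ks)"] by simp
  finally show "tsym d T (perm_idx \<tau> ks) = tsym d T ks"
    unfolding tsym_def using l by simp
qed (simp add: tsym_def)

lemma tsym_of_symmetric:
  assumes "symmetric_tensor d S"
  shows "tsym d S = S"
proof
  fix ks :: "'a list"
  show "tsym d S ks = S ks"
  proof (cases "length ks = d")
    case True
    have "(\<Sum>\<sigma>\<in>{\<sigma>. \<sigma> permutes {..<d}}. S (perm_idx \<sigma> ks)) = (\<Sum>\<sigma>\<in>{\<sigma>. \<sigma> permutes {..<d}}. S ks)"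
      using assms True unfolding symmetric_tensor_def by (intro sum.cong) auto
    also have "\<dots> = fact d * S ks" using card_permutations[of "{..<d}" d] by simp
    finally show ?thesis unfolding tsym_def using True by simp
  next
    case False
    then show ?thesis using assms unfolding tsym_def symmetric_tensor_def is_tensor_def by simp
  qed
qed

lemma tsym_tsym: "tsym d (tsym d T) = tsym d T"
  by (rule tsym_of_symmetric[OF tsym_symmetric])

lemma tpow_symmetric: "symmetric_tensor d (tpow d x)"
  unfolding symmetric_tensor_def is_tensor_def
proof (intro conjI allI impI)
  fix ks :: "'a list" and \<sigma> assume l: "length ks = d" and s: "\<sigma> permutes {..<d}"
  have b: "bij_betw \<sigma> {..<d} {..<d}" using s permutes_imp_bij by blast
  have "(\<Prod>j<d. x $ (ks ! \<sigma> j)) = (\<Prod>j<d. x $ (ks ! j))"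
    using prod.reindex_bij_betw[OF b, of "\<lambda>j. x $ (ks ! j)"] by simp
  then show "tpow d x (perm_idx \<sigma> ks) = tpow d x ks"
    using l by (simp add: tpow_eq)
qed (simp add: tpow_eq)

lemma tinner_commute: "tinner d S T = tinner d T S"
  unfolding tinner_def by (simp add: mult.commute)

lemma tinner_tsym_tpow: "tinner d (tsym d T) (tpow d x) = tinner d T (tpow d x)"
  by (simp add: tinner_tsym tsym_of_symmetric[OF tpow_symmetric])

lemma hs_tsym:
  assumes T: "is_tensor d T"
  shows "hs_norm d (tsym d T) \<le> hs_norm d T \<and> (hs_norm d (tsym d T) = hs_norm d T \<longleftrightarrow> tsym d T = T)"
proof -
  let ?S = "tsym d T"
  have k: "tinner d ?S T = tinner d ?S ?S"
    by (metis tinner_tsym tsym_tsym tinner_commute)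
  have dec: "tinner d T T = tinner d ?S ?S + (\<Sum>is\<in>idx d. (T is - ?S is)^2)"
  proof -
    have "(\<Sum>is\<in>idx d. (T is - ?S is)^2) = (\<Sum>is\<in>idx d. T is * T is - 2 * (?S is * T is) + ?S is * ?S is)"
      by (intro sum.cong refl) (simp add: power2_eq_square algebra_simps)
    also have "\<dots> = tinner d T T - 2 * tinner d ?S T + tinner d ?S ?S"
      unfolding tinner_def by (simp add: sum.distrib sum_subtractf sum_distrib_left)
    finally have "(\<Sum>is\<in>idx d. (T is - ?S is)^2) = tinner d T T - 2 * tinner d ?S T + tinner d ?S ?S" .
    then show ?thesis using k by simp
  qed
  have nn: "0 \<le> (\<Sum>is\<in>idx d. (T is - ?S is)^2)" by (simp add: sum_nonneg)
  have le: "hs_norm d ?S \<le> hs_norm d T" unfolding hs_norm_def using dec nn by simp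
  have "hs_norm d ?S = hs_norm d T \<longleftrightarrow> (\<Sum>is\<in>idx d. (T is - ?S is)^2) = 0"
  proof -
    have "tinner d ?S ?S \<ge> 0" unfolding tinner_def by (simp add: sum_nonneg)
    then show ?thesis unfolding hs_norm_def using dec nn by (auto simp: real_sqrt_eq_iff)
  qed
  also have "\<dots> \<longleftrightarrow> (\<forall>is\<in>idx d. T is = ?S is)"
    by (simp add: sum_nonneg_eq_0_iff)
  also have "\<dots> \<longleftrightarrow> ?S = T"
  proof
    assume a: "\<forall>is\<in>idx d. T is = ?S is"
    show "?S = T"
    proof
      fix ks :: "'a list" show "?S ks = T ks"
        using a T by (cases "length ks = d") (auto simp: tsym_def is_tensor_def)
    qed
  qed auto
  finally show ?thesis using le by simp
qed

lemma spec_tsym_le: "spec_norm d (tsym d T) \<le> spec_norm d T"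
proof (rule spec_le)
  fix f :: "nat \<Rightarrow> real^'a" assume f: "\<forall>j<d. norm (f j) = 1"
  let ?P = "{\<sigma>. \<sigma> permutes {..<d}}"
  have "\<bar>mev (tsym d T) d f\<bar> = (1 / fact d) * \<bar>\<Sum>\<sigma>\<in>?P. mev T d (f \<circ> \<sigma>)\<bar>"
    by (simp add: mev_tsym abs_mult)
  also have "\<dots> \<le> (1 / fact d) * (\<Sum>\<sigma>\<in>?P. spec_norm d T)"
  proof -
    have "\<bar>mev T d (f \<circ> \<sigma>)\<bar> \<le> spec_norm d T" if "\<sigma> \<in> ?P" for \<sigma>
    proof (rule spec_ge)
      fix j assume "j < d"
      then have "\<sigma> j < d" using permutes_in_image[of \<sigma> "{..<d}" j] that by simp
      then show "norm ((f \<circ> \<sigma>) j) = 1" using f by simp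
    qed
    then have "(\<Sum>\<sigma>\<in>?P. \<bar>mev T d (f \<circ> \<sigma>)\<bar>) \<le> (\<Sum>\<sigma>\<in>?P. spec_norm d T)"
      by (rule sum_mono)
    then have "\<bar>\<Sum>\<sigma>\<in>?P. mev T d (f \<circ> \<sigma>)\<bar> \<le> (\<Sum>\<sigma>\<in>?P. spec_norm d T)"
      by (rule order_trans[OF sum_abs])
    then show ?thesis by (simp add: divide_right_mono)
  qed
  also have "\<dots> = spec_norm d T" using card_permutations[of "{..<d}" d] by simp
  finally show "\<bar>mev (tsym d T) d f\<bar> \<le> spec_norm d T" .
qed




lemma mprod_upd:
  assumes "i < d"
  shows "mprod d (f(i:=u)) ks = u $ (ks ! i) * (\<Prod>j\<in>{..<d}-{i}. f j $ (ks ! j))"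
proof -
  have "mprod d (f(i:=u)) ks = (\<Prod>j\<in>{..<d}. (f(i:=u)) j $ (ks ! j))" by (simp add: mprod_def)
  also have "\<dots> = (f(i:=u)) i $ (ks ! i) * (\<Prod>j\<in>{..<d}-{i}. (f(i:=u)) j $ (ks ! j))"
    using assms by (intro prod.remove) auto
  also have "(\<Prod>j\<in>{..<d}-{i}. (f(i:=u)) j $ (ks ! j)) = (\<Prod>j\<in>{..<d}-{i}. f j $ (ks ! j))"
    by (intro prod.cong) auto
  finally show ?thesis by (simp only: fun_upd_same)
qed

lemma axis_nth: "axis a (1::real) $ b = (if b = a then 1 else 0)"
  by (simp add: axis_def)

lemma sum_axis: "(\<Sum>a\<in>UNIV. u $ a * axis a 1 $ b) = (u::real^'n::finite) $ b"
proof -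
  have "(\<Sum>a\<in>UNIV. u $ a * axis a 1 $ b) = (\<Sum>a\<in>UNIV. if b = a then u $ a else 0)"
    by (intro sum.cong) (auto simp: axis_nth)
  then show ?thesis by simp
qed

lemma mev_upd_inner:
  assumes "i < d"
  shows "mev T d (f(i:=u)) = u \<bullet> (\<chi> a. mev T d (f(i:=axis a 1)))"
proof -
  define R where "R ks = (\<Prod>j\<in>{..<d}-{i}. f j $ (ks ! j))" for ks
  have m: "mev T d (f(i:=v)) = (\<Sum>ks\<in>idx d. T ks * (v $ (ks ! i) * R ks))" for v
    unfolding mev_def R_def by (simp only: mprod_upd[OF assms])
  have "u \<bullet> (\<chi> a. mev T d (f(i:=axis a 1))) = (\<Sum>a\<in>UNIV. u $ a * (\<Sum>ks\<in>idx d. T ks * (axis a 1 $ (ks ! i) * R ks)))"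
    by (simp add: inner_vec_def m)
  also have "\<dots> = (\<Sum>a\<in>UNIV. \<Sum>ks\<in>idx d. T ks * R ks * (u $ a * axis a 1 $ (ks ! i)))"
    by (simp add: sum_distrib_left mult_ac)
  also have "\<dots> = (\<Sum>ks\<in>idx d. T ks * R ks * (\<Sum>a\<in>UNIV. u $ a * axis a 1 $ (ks ! i)))"
    by (subst sum.swap) (simp add: sum_distrib_left)
  also have "\<dots> = (\<Sum>ks\<in>idx d. T ks * R ks * u $ (ks ! i))"
    by (simp add: sum_axis)
  also have "\<dots> = mev T d (f(i:=u))"
    by (simp add: m mult_ac)
  finally show ?thesis by simp
qed

lemma mev_upd_lin:
  assumes "i < d"
  shows "mev T d (f(i := a *\<^sub>R u + b *\<^sub>R v)) = a * mev T d (f(i:=u)) + b * mev T d (f(i:=v))"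
proof -
  define c where "c = (\<chi> a. mev T d (f(i:=axis a 1)))"
  have e: "mev T d (f(i:=w)) = w \<bullet> c" for w unfolding c_def by (rule mev_upd_inner[OF assms])
  show ?thesis unfolding e by (simp add: inner_add_left)
qed

lemma mev_cong: "(\<And>j. j < d \<Longrightarrow> f j = g j) \<Longrightarrow> mev T d f = mev T d g"
proof -
  assume a: "\<And>j. j < d \<Longrightarrow> f j = g j"
  have "mprod d f ks = mprod d g ks" for ks unfolding mprod_def using a by (intro prod.cong) auto
  then show ?thesis by (simp add: mev_def)
qed

lemma uniq_step:
  assumes H: "symmetric_tensor d H" and k: "k < d"
    and z: "\<And>t. mev H d (\<lambda>j. if j < k then g j else x + t *\<^sub>R y) = 0"
  shows "mev H d (\<lambda>j. if j < k then g j else if j = k then y else x) = 0"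
proof -
  define h where "h t = (\<lambda>j. if j < k then g j else x + t *\<^sub>R y)" for t :: real
  define h0 where "h0 = (\<lambda>j. if j < k then g j else x)"
  define D where "D ks = (\<Sum>j<d. (if j < k then 0 else mprod d (h0(j:=y)) ks))" for ks
  have dk: "((\<lambda>t. mprod d (h t) ks) has_field_derivative D ks) (at 0)" for ks
  proof -
    define c where "c j t = (if j < k then g j $ (ks ! j) else x $ (ks ! j) + t * y $ (ks ! j))" for j t
    define c' where "c' j = (if j < k then 0 else y $ (ks ! j))" for j
    have "(c j has_field_derivative c' j) (at 0)" for j
      unfolding c_def c'_def by (cases "j < k") (auto intro!: derivative_eq_intros)
    then have 1: "((\<lambda>t. \<Prod>j<d. c j t) has_field_derivative (\<Sum>j<d. c' j * (\<Prod>l\<in>{..<d}-{j}. c l 0))) (at 0)"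
      by (rule has_field_derivative_prod)
    have 2: "(\<lambda>t. \<Prod>j<d. c j t) = (\<lambda>t. mprod d (h t) ks)"
      unfolding mprod_def h_def c_def by (intro ext prod.cong) auto
    have 3: "c' j * (\<Prod>l\<in>{..<d}-{j}. c l 0) = (if j < k then 0 else mprod d (h0(j:=y)) ks)" if "j < d" for j
    proof (cases "j < k")
      case False
      have "(\<Prod>l\<in>{..<d}-{j}. c l 0) = (\<Prod>l\<in>{..<d}-{j}. h0 l $ (ks ! l))"
        unfolding c_def h0_def by (intro prod.cong) auto
      moreover have "mprod d (h0(j:=y)) ks = y $ (ks ! j) * (\<Prod>l\<in>{..<d}-{j}. h0 l $ (ks ! l))"
        by (rule mprod_upd[OF that])
      ultimately show ?thesis using False by (simp add: c'_def)
    qed (simp add: c'_def)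
    have "(\<Sum>j<d. c' j * (\<Prod>l\<in>{..<d}-{j}. c l 0)) = D ks"
      unfolding D_def using 3 by (intro sum.cong) auto
    then show ?thesis using 1 2 by simp
  qed
  have d1: "((\<lambda>t. mev H d (h t)) has_field_derivative (\<Sum>ks\<in>idx d. H ks * D ks)) (at 0)"
    unfolding mev_def by (intro DERIV_sum DERIV_cmult dk)
  have "(\<lambda>t. mev H d (h t)) = (\<lambda>t. 0)" using z unfolding h_def by simp
  then have d2: "((\<lambda>t. mev H d (h t)) has_field_derivative 0) (at 0)" by simp
  have z0: "(\<Sum>ks\<in>idx d. H ks * D ks) = 0"
    using DERIV_unique[OF d1 d2] .
  define M where "M = mev H d (\<lambda>j. if j < k then g j else if j = k then y else x)"
  have sw: "(\<Sum>ks\<in>idx d. H ks * D ks) = (\<Sum>j<d. (if j < k then 0 else mev H d (h0(j:=y))))"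
    unfolding D_def mev_def sum_distrib_left
    by (subst sum.swap) (intro sum.cong refl, simp)
  have eqj: "mev H d (h0(j:=y)) = M" if "k \<le> j" "j < d" for j
  proof -
    have t: "Transposition.transpose k j permutes {..<d}" using that k by (intro permutes_swap_id) auto
    have "mev H d (h0(j:=y)) = mev H d (h0(j:=y) \<circ> Transposition.transpose k j)"
      using mev_sym_comp[OF H t] by simp
    also have "h0(j:=y) \<circ> Transposition.transpose k j = (\<lambda>j. if j < k then g j else if j = k then y else x)"
      using that unfolding h0_def by (auto simp: Transposition.transpose_def fun_eq_iff)
    finally show ?thesis unfolding M_def .
  qed
  have "(\<Sum>j<d. (if j < k then 0 else mev H d (h0(j:=y)))) = (\<Sum>j<d. (if j < k then 0 else M))"
    using eqj by (intro sum.cong refl) auto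
  also have "\<dots> = (\<Sum>j\<in>{k..<d}. M)"
    by (rule sum.mono_neutral_cong_right) auto
  also have "\<dots> = real (d - k) * M" by simp
  finally have "real (d - k) * M = 0" using z0 sw by simp
  then show ?thesis using k unfolding M_def by simp
qed

lemma mev_all_zero:
  assumes H: "symmetric_tensor d H" and z: "\<And>x. mev H d (\<lambda>_. x) = 0"
  shows "mev H d g = 0"
proof -
  have "k \<le> d \<Longrightarrow> \<forall>g x. mev H d (\<lambda>j. if j < k then g j else x) = 0" for k
  proof (induction k)
    case 0 then show ?case using z by simp
  next
    case (Suc k)
    show ?case
    proof (intro allI)
      fix g x
      have "mev H d (\<lambda>j. if j < k then g j else if j = k then g k else x) = 0"
        using Suc by (intro uniq_step[OF H]) auto
      moreover have "(\<lambda>j. if j < k then g j else if j = k then g k else x) = (\<lambda>j. if j < Suc k then g j else x)"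
        by (auto simp: fun_eq_iff less_Suc_eq)
      ultimately show "mev H d (\<lambda>j. if j < Suc k then g j else x) = 0" by simp
    qed
  qed
  then have "mev H d (\<lambda>j. if j < d then g j else g 0) = 0"
    using order_refl[of d] by (elim meta_allE[of _ d] impE) (simp del: fun_upd_apply)
  moreover have "mev H d (\<lambda>j. if j < d then g j else g 0) = mev H d g" by (rule mev_cong) simp
  ultimately show ?thesis by simp
qed

lemma mprod_axis:
  assumes "length ks = d" "length js = d"
  shows "mprod d (\<lambda>j. axis (ks ! j) 1) js = (if js = ks then 1 else 0)"
proof (cases "js = ks")
  case True then show ?thesis by (simp add: mprod_def axis_nth)
next
  case False
  then have "\<exists>j<d. js ! j \<noteq> ks ! j" using assms by (auto simp: list_eq_iff_nth_eq)
  then obtain j where j: "j < d" "js ! j \<noteq> ks ! j" by blast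
  then show ?thesis unfolding mprod_def using False
    by (subst prod_zero) (auto simp: axis_nth intro!: bexI[of _ j])
qed

lemma mev_axis:
  assumes "length ks = d"
  shows "mev T d (\<lambda>j. axis (ks ! j) 1) = T ks"
proof -
  have "mev T d (\<lambda>j. axis (ks ! j) 1) = (\<Sum>js\<in>idx d. if js = ks then T js else 0)"
    unfolding mev_def using mprod_axis[OF assms] by (intro sum.cong) auto
  also have "\<dots> = T ks" using assms by (simp add: sum.delta')
  finally show ?thesis .
qed

lemma sym_zero:
  assumes H: "symmetric_tensor d H" and z: "\<And>x. tinner d H (tpow d x) = 0"
  shows "H = (\<lambda>_. 0)"
proof
  fix ks :: "'a list"
  show "H ks = 0"
  proof (cases "length ks = d")
    case True
    then show ?thesis using mev_all_zero[OF H] z mev_axis[OF True, of H] by (simp add: tinner_tpow)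
  next
    case False then show ?thesis using H by (simp add: symmetric_tensor_def is_tensor_def)
  qed
qed

lemma symmetric_diff:
  "symmetric_tensor d A \<Longrightarrow> symmetric_tensor d B \<Longrightarrow> symmetric_tensor d (\<lambda>ks. A ks - B ks)"
  by (simp add: symmetric_tensor_def is_tensor_def)

lemma symmetric_scale:
  "symmetric_tensor d A \<Longrightarrow> symmetric_tensor d (\<lambda>ks. c * A ks)"
  by (simp add: symmetric_tensor_def is_tensor_def)

lemma tinner_diff_left: "tinner d (\<lambda>ks. A ks - B ks) C = tinner d A C - tinner d B C"
  unfolding tinner_def by (simp add: left_diff_distrib sum_subtractf)

lemma tinner_scale_left: "tinner d (\<lambda>ks. c * A ks) C = c * tinner d A C"
  unfolding tinner_def by (simp add: sum_distrib_left mult.assoc)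

lemma sym_eq:
  assumes "symmetric_tensor d A" "symmetric_tensor d B"
    and "\<And>x. tinner d A (tpow d x) = tinner d B (tpow d x)"
  shows "A = B"
proof -
  have h: "(\<lambda>ks. A ks - B ks) = (\<lambda>_. 0)"
    using assms by (intro sym_zero symmetric_diff) (simp_all add: tinner_diff_left)
  show ?thesis
  proof
    fix ks show "A ks = B ks" using fun_cong[OF h, of ks] by simp
  qed
qed




lemma sum_idx_add:
  "(\<Sum>ks\<in>idx (p+q). h ks) = (\<Sum>a\<in>idx p. \<Sum>b\<in>idx q. h (a @ b))"
proof -
  have "bij_betw (\<lambda>(a,b). a @ b) (idx p \<times> idx q) (idx (p+q))"
    by (rule bij_betw_byWitness[where f'="\<lambda>ks. (take p ks, drop p ks)"]) auto
  then have "(\<Sum>x\<in>idx p \<times> idx q. h ((\<lambda>(a,b). a @ b) x)) = (\<Sum>ks\<in>idx (p+q). h ks)"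
    by (rule sum.reindex_bij_betw)
  then show ?thesis by (simp add: sum.cartesian_product case_prod_beta)
qed

lemma tinner_ttensor:
  "tinner (p+q) (ttensor p q A B) (ttensor p q C D) = tinner p A C * tinner q B D"
  unfolding tinner_def sum_idx_add sum_product
  by (intro sum.cong refl) (simp add: ttensor_def)

lemma prod_split: "(\<Prod>j<p+q. g j) = (\<Prod>j<p. g j) * (\<Prod>j<q. g (p+j)::real)" for p q :: nat
proof -
  have "(\<Prod>j<p+q. g j) = (\<Prod>j\<in>{0..<p}. g j) * (\<Prod>j\<in>{p..<p+q}. g j)"
    by (simp add: prod.atLeastLessThan_concat atLeast0LessThan[symmetric])
  also have "(\<Prod>j\<in>{p..<p+q}. g j) = (\<Prod>j\<in>{0..<q}. g (j+p))"
    using prod.shift_bounds_nat_ivl[of g 0 p q] by (simp add: add.commute)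
  finally show ?thesis by (simp add: atLeast0LessThan add.commute)
qed

lemma tpow_split: "tpow (p+q) x = ttensor p q (tpow p x) (tpow q x)"
proof
  fix ks :: "'a list"
  show "tpow (p+q) x ks = ttensor p q (tpow p x) (tpow q x) ks"
  proof (cases "length ks = p + q")
    case True
    have "(\<Prod>j<p+q. x $ (ks ! j)) = (\<Prod>j<p. x $ (take p ks ! j)) * (\<Prod>j<q. x $ (drop p ks ! j))"
      unfolding prod_split using True by (simp add: nth_drop)
    then show ?thesis using True by (simp add: tpow_eq ttensor_def)
  next
    case False then show ?thesis by (simp add: tpow_eq ttensor_def)
  qed
qed

lemma tinner_tpow_tpow: "tinner p (tpow p c) (tpow p x) = (c \<bullet> x) ^ p"
proof (induction p)
  case 0
  have h0: "idx 0 = {[]}" by (auto simp: idx_def)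
  show ?case unfolding tinner_def h0 by (simp add: tpow_eq)
next
  case (Suc p)
  have i1: "idx 1 = (\<lambda>a. [a]) ` UNIV"
    by (auto simp: idx_def length_Suc_conv One_nat_def)
  have "tinner 1 (tpow 1 c) (tpow 1 x) = c \<bullet> x"
    unfolding tinner_def i1 by (subst sum.reindex) (auto simp: inj_on_def tpow_eq inner_vec_def)
  then have "tinner (1+p) (tpow (1+p) c) (tpow (1+p) x) = (c \<bullet> x) * (c \<bullet> x)^p"
    unfolding tpow_split tinner_ttensor Suc.IH by simp
  then show ?case by simp
qed

lemma hs_tpow: "hs_norm p (tpow p c) = norm c ^ p"
  unfolding hs_norm_def tinner_tpow_tpow by (simp add: norm_eq_sqrt_inner real_sqrt_power)

lemma tinner_self_nonneg: "tinner d A A \<ge> 0"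
  unfolding tinner_def by (simp add: sum_nonneg)

lemma tinner_self_zero: "tinner d A A = 0 \<Longrightarrow> ks \<in> idx d \<Longrightarrow> A ks = 0"
  unfolding tinner_def by (simp add: sum_nonneg_eq_0_iff)

lemma tinner_expand:
  "tinner d (\<lambda>ks. A ks - c * B ks) (\<lambda>ks. A ks - c * B ks)
     = tinner d A A - 2 * c * tinner d A B + c^2 * tinner d B B"
proof -
  have "tinner d (\<lambda>ks. A ks - c * B ks) (\<lambda>ks. A ks - c * B ks)
      = (\<Sum>ks\<in>idx d. A ks * A ks - 2 * c * (A ks * B ks) + c^2 * (B ks * B ks))"
    unfolding tinner_def by (intro sum.cong refl) (simp add: algebra_simps power2_eq_square)
  also have "\<dots> = tinner d A A - 2 * c * tinner d A B + c^2 * tinner d B B"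
    unfolding tinner_def by (simp add: sum.distrib sum_subtractf sum_distrib_left)
  finally show ?thesis .
qed

lemma tinner_cs: "(tinner d A B)^2 \<le> tinner d A A * tinner d B B"
proof (cases "tinner d B B = 0")
  case True
  then have "\<forall>ks\<in>idx d. B ks = 0" using tinner_self_zero by blast
  then have "tinner d A B = 0" unfolding tinner_def by simp
  then show ?thesis using True by simp
next
  case False
  then have pos: "tinner d B B > 0" using tinner_self_nonneg[of d B] by linarith
  define c where "c = tinner d A B / tinner d B B"
  have "0 \<le> tinner d A A - 2 * c * tinner d A B + c^2 * tinner d B B"
    using tinner_self_nonneg tinner_expand by metis
  also have "\<dots> = tinner d A A - (tinner d A B)^2 / tinner d B B"
    unfolding c_def using pos by (simp add: field_simps power2_eq_square)
  finally show ?thesis using pos by (simp add: field_simps)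
qed

lemma abs_tinner_le: "\<bar>tinner d A B\<bar> \<le> hs_norm d A * hs_norm d B"
proof -
  have "\<bar>tinner d A B\<bar> = sqrt ((tinner d A B)^2)" by simp
  also have "\<dots> \<le> sqrt (tinner d A A * tinner d B B)" using tinner_cs by (rule real_sqrt_le_mono)
  also have "\<dots> = hs_norm d A * hs_norm d B" by (simp add: hs_norm_def real_sqrt_mult)
  finally show ?thesis .
qed

lemma cs_eq:
  assumes B: "tinner d B B \<noteq> 0" and eq: "\<bar>tinner d A B\<bar> = hs_norm d A * hs_norm d B"
  shows "\<forall>ks\<in>idx d. A ks = (tinner d A B / tinner d B B) * B ks"
proof -
  have pos: "tinner d B B > 0" using B tinner_self_nonneg[of d B] by linarith
  have "(tinner d A B)^2 = (hs_norm d A * hs_norm d B)^2" using eq by (metis power2_abs)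
  also have "\<dots> = tinner d A A * tinner d B B"
    by (simp add: hs_norm_def power_mult_distrib tinner_self_nonneg)
  finally have sq: "(tinner d A B)^2 = tinner d A A * tinner d B B" .
  define c where "c = tinner d A B / tinner d B B"
  have "tinner d (\<lambda>ks. A ks - c * B ks) (\<lambda>ks. A ks - c * B ks) = tinner d A A - 2 * c * tinner d A B + c^2 * tinner d B B"
    by (rule tinner_expand)
  also have "\<dots> = tinner d A A - (tinner d A B)^2 / tinner d B B"
    unfolding c_def using pos by (simp add: field_simps power2_eq_square)
  also have "\<dots> = 0" using sq pos by simp
  finally have "tinner d (\<lambda>ks. A ks - c * B ks) (\<lambda>ks. A ks - c * B ks) = 0" .
  then show ?thesis unfolding c_def[symmetric] using tinner_self_zero by fastforce
qed

lemma hs_ttensor: "hs_norm (p+q) (ttensor p q A B) = hs_norm p A * hs_norm q B"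
  unfolding hs_norm_def tinner_ttensor by (simp add: real_sqrt_mult)

lemma is_tensor_ttensor: "is_tensor (p+q) (ttensor p q A B)"
  by (simp add: is_tensor_def ttensor_def)

lemma tinner_tsym_ttensor_tpow:
  "tinner (p+q) (tsym (p+q) (ttensor p q F G)) (tpow (p+q) x) = tinner p F (tpow p x) * tinner q G (tpow q x)"
  by (simp only: tinner_tsym_tpow) (simp add: tpow_split tinner_ttensor)

lemma sym_tensor_prod_eq: "sym_tensor_prod p q F G = tsym (p + q) (ttensor p q F G)"
  unfolding sym_tensor_prod_def
proof (rule the_equality)
  show "symmetric_tensor (p + q) (tsym (p + q) (ttensor p q F G)) \<and>
    (\<forall>x. tinner (p + q) (tsym (p + q) (ttensor p q F G)) (tpow (p + q) x) = tinner p F (tpow p x) * tinner q G (tpow q x))"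
    by (simp add: tsym_symmetric tinner_tsym_ttensor_tpow)
next
  fix H assume "symmetric_tensor (p + q) H \<and> (\<forall>x. tinner (p + q) H (tpow (p + q) x) = tinner p F (tpow p x) * tinner q G (tpow q x))"
  then show "H = tsym (p + q) (ttensor p q F G)"
    by (intro sym_eq) (auto simp: tsym_symmetric tinner_tsym_ttensor_tpow)
qed

lemma poly_tensor_eq:
  assumes "symmetric_tensor p F" "\<And>x. f x = tinner p F (tpow p x)"
  shows "poly_tensor p f = F"
  unfolding poly_tensor_def
proof (rule the_equality)
  show "symmetric_tensor p F \<and> (\<forall>x. f x = tinner p F (tpow p x))" using assms by simp
next
  fix H assume "symmetric_tensor p H \<and> (\<forall>x. f x = tinner p H (tpow p x))"
  then show "H = F" using assms by (intro sym_eq) auto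
qed




lemma perm_swap0_upd:
  assumes l: "l < length ks"
  shows "perm_idx (Transposition.transpose 0 l) (ks[l:=i]) = i # tl (perm_idx (Transposition.transpose 0 l) ks)"
    and "perm_idx (Transposition.transpose 0 l) ks = ks ! l # tl (perm_idx (Transposition.transpose 0 l) ks)"
proof -
  let ?s = "Transposition.transpose 0 l"
  have s_lt: "?s j < length ks" if "j < length ks" for j
    using that l by (auto simp: Transposition.transpose_def)
  show "perm_idx ?s ks = ks ! l # tl (perm_idx ?s ks)"
  proof -
    have ne: "perm_idx ?s ks \<noteq> []" using l by (metis length_perm_idx less_zeroE list.size(3))
    have "perm_idx ?s ks ! 0 = ks ! (?s 0)" using l by (subst nth_perm_idx) auto
    then have "hd (perm_idx ?s ks) = ks ! l" using ne by (simp add: hd_conv_nth)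
    then show ?thesis using ne by (metis list.collapse)
  qed
  show "perm_idx ?s (ks[l:=i]) = i # tl (perm_idx ?s ks)"
  proof (rule nth_equalityI)
    show "length (perm_idx ?s (ks[l:=i])) = length (i # tl (perm_idx ?s ks))" using l by simp
  next
    fix j assume j: "j < length (perm_idx ?s (ks[l:=i]))"
    show "perm_idx ?s (ks[l:=i]) ! j = (i # tl (perm_idx ?s ks)) ! j"
    proof (cases j)
      case 0
      have ne: "ks \<noteq> []" using l by auto
      have "perm_idx ?s (ks[l:=i]) ! 0 = ks[l:=i] ! (?s 0)" using ne by (intro nth_perm_idx) simp
      then show ?thesis using 0 l by simp
    next
      case (Suc j')
      have "?s j \<noteq> l" using Suc by (auto simp: Transposition.transpose_def)
      then show ?thesis using j Suc l s_lt by (simp add: nth_tl)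
    qed
  qed
qed

definition slice_par :: "nat \<Rightarrow> ('n::finite list \<Rightarrow> real) \<Rightarrow> real^'n \<Rightarrow> bool" where
  "slice_par m T v \<longleftrightarrow> (\<forall>r i k. length r = m - 1 \<longrightarrow> T (i # r) * v $ k = T (k # r) * v $ i)"

lemma exchange:
  assumes T: "symmetric_tensor m T" and sp: "slice_par m T v"
    and ks: "length ks = m" and l: "l < m"
  shows "T (ks[l:=i]) * v $ (ks ! l) = T ks * v $ i"
proof -
  let ?s = "Transposition.transpose 0 l"
  let ?R = "tl (perm_idx ?s ks)"
  have sp': "?s permutes {..<m}" using l by (intro permutes_swap_id) auto
  have "T (ks[l:=i]) = T (perm_idx ?s (ks[l:=i]))"
    using T sp' ks unfolding symmetric_tensor_def by simp
  also have "\<dots> = T (i # ?R)" using perm_swap0_upd(1)[of l ks i] l ks by simp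
  finally have 1: "T (ks[l:=i]) = T (i # ?R)" .
  have "T ks = T (perm_idx ?s ks)"
    using T sp' ks unfolding symmetric_tensor_def by simp
  also have "\<dots> = T (ks ! l # ?R)" using perm_swap0_upd(2)[of l ks] l ks by simp
  finally have 2: "T ks = T (ks ! l # ?R)" .
  have "length ?R = m - 1" using ks by simp
  then show ?thesis using sp 1 2 unfolding slice_par_def by metis
qed

lemma rank1_of_slice:
  assumes T: "symmetric_tensor m T" and sp: "slice_par m T v" and v0: "v $ i0 \<noteq> 0"
  shows "T = (\<lambda>ks. (T (replicate m i0) / v $ i0 ^ m) * tpow m v ks)"
proof -
  have main: "t \<le> m \<Longrightarrow> T (take t ks @ replicate (m - t) i0) * v $ i0 ^ t = T (replicate m i0) * (\<Prod>j<t. v $ (ks ! j))"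
    if ks: "length ks = m" for ks t
  proof (induction t)
    case 0 then show ?case by simp
  next
    case (Suc t)
    then have t: "t < m" by simp
    let ?L = "take t ks @ replicate (m - t) i0"
    have Lt: "?L ! t = i0" using t ks by (simp add: nth_append)
    have lenL: "length ?L = m" using t ks by simp
    have L1: "take (Suc t) ks @ replicate (m - Suc t) i0 = ?L[t := ks ! t]"
    proof -
      have "replicate (m - t) i0 = i0 # replicate (m - Suc t) i0" using t
        by (metis Suc_diff_Suc replicate_Suc)
      then show ?thesis using t ks by (simp add: take_Suc_conv_app_nth list_update_append)
    qed
    have "T (?L[t := ks ! t]) * v $ (?L ! t) = T ?L * v $ (ks ! t)"
      by (rule exchange[OF T sp lenL t])
    then have "T (take (Suc t) ks @ replicate (m - Suc t) i0) * v $ i0 = T ?L * v $ (ks ! t)"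
      using L1 Lt by simp
    then have "T (take (Suc t) ks @ replicate (m - Suc t) i0) * v $ i0 ^ Suc t
        = (T ?L * v $ i0 ^ t) * v $ (ks ! t)"
      by (simp add: algebra_simps)
    also have "\<dots> = T (replicate m i0) * (\<Prod>j<Suc t. v $ (ks ! j))"
      using Suc t by simp
    finally show ?case .
  qed
  show ?thesis
  proof
    fix ks :: "'a list"
    show "T ks = T (replicate m i0) / v $ i0 ^ m * tpow m v ks"
    proof (cases "length ks = m")
      case True
      have "T ks * v $ i0 ^ m = T (replicate m i0) * (\<Prod>j<m. v $ (ks ! j))"
        using main[OF True, of m] True by simp
      then show ?thesis using True v0 by (simp add: tpow_eq field_simps)
    next
      case False then show ?thesis using T by (simp add: tpow_eq symmetric_tensor_def is_tensor_def)
    qed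
  qed
qed

lemma perm_swap_0p:
  assumes "length r + 1 = p" "length s + 1 = q"
  shows "perm_idx (Transposition.transpose 0 p) ((i # r) @ (j # s)) = (j # r) @ (i # s)"
proof (rule nth_equalityI)
  show "length (perm_idx (Transposition.transpose 0 p) ((i # r) @ j # s)) = length ((j # r) @ i # s)" by simp
next
  fix l assume l: "l < length (perm_idx (Transposition.transpose 0 p) ((i # r) @ j # s))"
  then have l': "l < p + q" using assms by simp
  show "perm_idx (Transposition.transpose 0 p) ((i # r) @ j # s) ! l = ((j # r) @ i # s) ! l"
    using l l' assms by (auto simp: nth_append nth_Cons' Transposition.transpose_def)
qed

lemma step1:
  assumes H: "symmetric_tensor (p+q) (ttensor p q F G)" and p: "p \<ge> 1" and q: "q \<ge> 1"
    and r: "length r = p - 1" and s: "length s = q - 1"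
  shows "F (i # r) * G (j # s) = F (j # r) * G (i # s)"
proof -
  let ?s = "Transposition.transpose 0 p"
  have sp: "?s permutes {..<p+q}" using q by (intro permutes_swap_id) auto
  have len: "length ((i # r) @ (j # s)) = p + q" using p q r s by simp
  have "ttensor p q F G (perm_idx ?s ((i # r) @ (j # s))) = ttensor p q F G ((i # r) @ (j # s))"
    using H sp len unfolding symmetric_tensor_def by blast
  moreover have "perm_idx ?s ((i # r) @ (j # s)) = (j # r) @ (i # s)"
    using perm_swap_0p[of r p s q] p q r s by simp
  moreover have "length (i # r) = p" "length (j # r) = p" using r p by auto
  ultimately show ?thesis using len by (simp add: ttensor_def del: append_Cons)
qed

lemma tpow_Cons_rep:
  assumes "length r = p - 1" "p \<ge> 1"
  shows "tpow p v (i # replicate (p - 1) k) = v $ i * v $ k ^ (p - 1)"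
proof -
  obtain p' where p': "p = Suc p'" using assms by (cases p) auto
  have "(\<Prod>j<Suc p'. v $ ((i # replicate p' k) ! j)) = v $ i * (\<Prod>j<p'. v $ ((i # replicate p' k) ! Suc j))"
    by (subst prod.lessThan_Suc_shift) simp
  also have "\<dots> = v $ i * v $ k ^ p'" by simp
  finally show ?thesis using p' by (simp add: tpow_eq)
qed

lemma rank1_main:
  assumes F: "symmetric_tensor p F" and G: "symmetric_tensor q G"
    and p: "p \<ge> 1" and q: "q \<ge> 1"
    and F0: "F \<noteq> (\<lambda>_. 0)" and G0: "G \<noteq> (\<lambda>_. 0)"
    and H: "symmetric_tensor (p+q) (ttensor p q F G)"
  shows "\<exists>c a b. c \<noteq> 0 \<and> a \<noteq> 0 \<and> b \<noteq> 0 \<and> F = (\<lambda>ks. a * tpow p c ks) \<and> G = (\<lambda>ks. b * tpow q c ks)"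
proof -
  obtain ks0 where ks0: "G ks0 \<noteq> 0" using G0 by auto
  then have "length ks0 = q" using G unfolding symmetric_tensor_def is_tensor_def by metis
  then obtain j0 s0 where js: "ks0 = j0 # s0" "length s0 = q - 1" using q by (cases ks0) auto
  define v where "v = (\<chi> i. G (i # s0))"
  have v0: "v $ j0 \<noteq> 0" using ks0 js by (simp add: v_def)
  have spF: "slice_par p F v" unfolding slice_par_def v_def
    using step1[OF H p q _ js(2)] by (simp add: mult.commute)
  define a where "a = F (replicate p j0) / v $ j0 ^ p"
  have Fa: "F = (\<lambda>ks. a * tpow p v ks)" unfolding a_def by (rule rank1_of_slice[OF F spF v0])
  have a0: "a \<noteq> 0" using F0 Fa by auto
  have spG: "slice_par q G v" unfolding slice_par_def
  proof (intro allI impI)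
    fix s i k assume s: "length (s::'a list) = q - 1"
    let ?r = "replicate (p - 1) j0"
    have "F (i # ?r) * G (k # s) = F (k # ?r) * G (i # s)" using step1[OF H p q _ s] by simp
    then have "a * v $ j0 ^ (p - 1) * (v $ i * G (k # s)) = a * v $ j0 ^ (p - 1) * (v $ k * G (i # s))"
      using tpow_Cons_rep[of ?r p v] p by (simp add: Fa mult_ac)
    then have "v $ i * G (k # s) = v $ k * G (i # s)" using a0 v0 by simp
    then show "G (i # s) * v $ k = G (k # s) * v $ i" by (simp add: mult.commute)
  qed
  define b where "b = G (replicate q j0) / v $ j0 ^ q"
  have Gb: "G = (\<lambda>ks. b * tpow q v ks)" unfolding b_def by (rule rank1_of_slice[OF G spG v0])
  have b0: "b \<noteq> 0" using G0 Gb by auto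
  have "v \<noteq> 0" using v0 by auto
  then show ?thesis using a0 b0 Fa Gb by blast
qed



definition Kset :: "(nat \<Rightarrow> real^'n::finite) set" where
  "Kset = PiE UNIV (\<lambda>_. sphere 0 1)"

lemma Kset_iff: "f \<in> Kset \<longleftrightarrow> (\<forall>k. norm (f k) = 1)"
  by (simp add: Kset_def PiE_iff)

lemma Kset_compact: "compact (Kset :: (nat \<Rightarrow> real^'n::finite) set)"
  using compactin_PiE[of "\<lambda>_. euclidean" UNIV "\<lambda>_. sphere (0::real^'n) 1"]
  unfolding Kset_def euclidean_product_topology by simp

lemma cont_mev: "continuous_on UNIV (\<lambda>f::nat \<Rightarrow> real^'n::finite. mev S d f)"
  unfolding mev_def mprod_def
  by (intro continuous_intros continuous_on_component continuous_on_product_coordinates)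

definition Qm :: "nat \<Rightarrow> (nat \<Rightarrow> real^'n::finite) \<Rightarrow> 'n \<Rightarrow> 'n \<Rightarrow> real" where
  "Qm d f a b = (\<Sum>k<d. f k $ a * f k $ b)"

definition Psi :: "nat \<Rightarrow> (nat \<Rightarrow> real^'n::finite) \<Rightarrow> real" where
  "Psi d f = (\<Sum>p\<in>UNIV. (Qm d f (fst p) (snd p))^2)"

lemma cont_Psi: "continuous_on UNIV (\<lambda>f::nat \<Rightarrow> real^'n::finite. Psi d f)"
  unfolding Psi_def Qm_def
  by (intro continuous_intros continuous_on_component continuous_on_product_coordinates)

lemma FL:
  fixes w0 z :: "real^'n::finite"
  assumes z: "norm z = 1" and ze: "z \<bullet> w0 = e" and M: "\<bar>e\<bar> = M"
    and bd: "\<And>y. norm y = 1 \<Longrightarrow> \<bar>y \<bullet> w0\<bar> \<le> M"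
  shows "w0 = e *\<^sub>R z"
proof -
  have M0: "M \<ge> 0" using M by auto
  have nw: "norm w0 \<le> M"
  proof (cases "w0 = 0")
    case True then show ?thesis using M0 by simp
  next
    case False
    let ?y = "(1 / norm w0) *\<^sub>R w0"
    have "norm ?y = 1" using False by simp
    then have "\<bar>?y \<bullet> w0\<bar> \<le> M" by (rule bd)
    moreover have "?y \<bullet> w0 = norm w0"
    proof -
      have "?y \<bullet> w0 = (1 / norm w0) * (norm w0)^2" by (simp add: power2_norm_eq_inner)
      then show ?thesis using False by (simp add: power2_eq_square)
    qed
    ultimately show ?thesis by simp
  qed
  have e2: "e^2 = M^2" using M by (metis power2_abs)
  have "(norm (w0 - e *\<^sub>R z))^2 = (norm w0)^2 - 2 * e * (z \<bullet> w0) + e^2 * (norm z)^2"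
    by (simp only: power2_norm_eq_inner) (simp add: inner_diff_left inner_diff_right inner_commute algebra_simps power2_eq_square)
  also have "\<dots> = (norm w0)^2 - M^2" using z ze e2 by (simp add: power2_eq_square)
  also have "\<dots> \<le> 0" using nw by (simp add: abs_le_square_iff power_mono)
  finally have "(norm (w0 - e *\<^sub>R z))^2 \<le> 0" .
  then have "norm (w0 - e *\<^sub>R z) = 0" using zero_le_power2[of "norm (w0 - e *\<^sub>R z)"] by simp
  then show ?thesis by simp
qed

lemma sum_remove2:
  fixes d :: nat
  assumes "i < d" "j < d" "i \<noteq> j"
  shows "(\<Sum>k<d. g k) = g i + g j + (\<Sum>k\<in>{..<d}-{i}-{j}. g k::real)"
proof -
  have "(\<Sum>k<d. g k) = g i + (\<Sum>k\<in>{..<d}-{i}. g k)" using assms by (intro sum.remove) auto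
  also have "(\<Sum>k\<in>{..<d}-{i}. g k) = g j + (\<Sum>k\<in>{..<d}-{i}-{j}. g k)" using assms by (intro sum.remove) auto
  finally show ?thesis by simp
qed

lemma Qm_upd2:
  assumes "i < d" "j < d" "i \<noteq> j"
  shows "Qm d (f(i:=u, j:=w)) x y = Qm d f x y - (f i $ x * f i $ y + f j $ x * f j $ y) + (u $ x * u $ y + w $ x * w $ y)"
proof -
  have r: "(\<Sum>k\<in>{..<d}-{i}-{j}. (f(i:=u, j:=w)) k $ x * (f(i:=u, j:=w)) k $ y) = (\<Sum>k\<in>{..<d}-{i}-{j}. f k $ x * f k $ y)"
    by (intro sum.cong) auto
  show ?thesis unfolding Qm_def sum_remove2[OF assms, of "\<lambda>k. (f(i:=u, j:=w)) k $ x * (f(i:=u, j:=w)) k $ y"]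
      sum_remove2[OF assms, of "\<lambda>k. f k $ x * f k $ y"] r
    using assms by simp
qed

lemma psi_convex:
  fixes X Y Z :: "'a::finite \<Rightarrow> real"
  assumes a: "\<alpha> > 0" "\<beta> > 0" "\<alpha> + \<beta> = 1" and Z: "\<And>p. Z p = \<alpha> * X p + \<beta> * Y p"
    and ne: "X p0 \<noteq> Y p0"
  shows "(\<Sum>p\<in>UNIV. (Z p)^2) < max (\<Sum>p\<in>UNIV. (X p)^2) (\<Sum>p\<in>UNIV. (Y p)^2)"
proof -
  have id: "(Z p)^2 = \<alpha> * (X p)^2 + \<beta> * (Y p)^2 - \<alpha> * \<beta> * (X p - Y p)^2" for p
    unfolding Z power2_eq_square using a(3) by algebra
  have "(\<Sum>p\<in>UNIV. (Z p)^2) < (\<Sum>p\<in>UNIV. \<alpha> * (X p)^2 + \<beta> * (Y p)^2)"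
  proof (rule sum_strict_mono_ex1)
    show "\<forall>p\<in>UNIV. (Z p)^2 \<le> \<alpha> * (X p)^2 + \<beta> * (Y p)^2"
      using a by (simp add: id)
    have "\<alpha> * \<beta> * (X p0 - Y p0)^2 > 0" using a ne by simp
    then show "\<exists>p\<in>UNIV. (Z p)^2 < \<alpha> * (X p)^2 + \<beta> * (Y p)^2"
      by (intro bexI[of _ p0]) (simp_all add: id)
  qed simp
  also have "\<dots> = \<alpha> * (\<Sum>p\<in>UNIV. (X p)^2) + \<beta> * (\<Sum>p\<in>UNIV. (Y p)^2)"
    by (simp add: sum.distrib sum_distrib_left)
  also have "\<dots> \<le> \<alpha> * max (\<Sum>p\<in>UNIV. (X p)^2) (\<Sum>p\<in>UNIV. (Y p)^2) + \<beta> * max (\<Sum>p\<in>UNIV. (X p)^2) (\<Sum>p\<in>UNIV. (Y p)^2)"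
    using a by (intro add_mono mult_left_mono) auto
  also have "\<dots> = max (\<Sum>p\<in>UNIV. (X p)^2) (\<Sum>p\<in>UNIV. (Y p)^2)"
    using a by (simp add: distrib_right[symmetric])
  finally show ?thesis .
qed
lemma norm_add_sq: "(norm (x + y))^2 = (norm x)^2 + 2 * (x \<bullet> y) + (norm (y::real^'n::finite))^2"
  by (simp only: power2_norm_eq_inner) (simp add: inner_add_left inner_add_right inner_commute)

lemma norm_diff_sq: "(norm (x - y))^2 = (norm x)^2 - 2 * (x \<bullet> y) + (norm (y::real^'n::finite))^2"
  by (simp only: power2_norm_eq_inner) (simp add: inner_diff_left inner_diff_right inner_commute)

lemma pair_step:
  fixes f :: "nat \<Rightarrow> real^'n::finite"
  assumes S: "symmetric_tensor d S" and fK: "f \<in> Kset" and fM: "\<bar>mev S d f\<bar> = spec_norm d S"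
    and ij: "i < d" "j < d" "i \<noteq> j" and c: "\<bar>f i \<bullet> f j\<bar> < 1"
  shows "\<exists>g\<in>Kset. \<bar>mev S d g\<bar> = spec_norm d S \<and> Psi d g > Psi d f"
proof -
  define M where "M = spec_norm d S"
  define e where "e = mev S d f"
  define a where "a = f i"
  define b where "b = f j"
  define c where "c = a \<bullet> b"
  have na: "norm a = 1" "norm b = 1" using fK by (auto simp: Kset_iff a_def b_def)
  have eM: "\<bar>e\<bar> = M" using fM by (simp add: e_def M_def)
  have c1: "\<bar>c\<bar> < 1" using c by (simp add: c_def a_def b_def)
  define Bf where "Bf u w = mev S d (f(i:=u, j:=w))" for u w
  have Bsym: "Bf u w = Bf w u" for u w
  proof -
    have t: "Transposition.transpose i j permutes {..<d}" using ij by (intro permutes_swap_id) auto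
    have "mev S d (f(i:=u, j:=w)) = mev S d (f(i:=u, j:=w) \<circ> Transposition.transpose i j)"
      using mev_sym_comp[OF S t] by simp
    also have "f(i:=u, j:=w) \<circ> Transposition.transpose i j = f(i:=w, j:=u)"
      using ij by (auto simp: fun_eq_iff Transposition.transpose_def)
    finally show ?thesis unfolding Bf_def .
  qed
  have Bbd: "\<bar>Bf u w\<bar> \<le> M" if "norm u = 1" "norm w = 1" for u w
    unfolding Bf_def M_def
  proof (rule spec_ge)
    fix k assume "k < d"
    show "norm ((f(i:=u, j:=w)) k) = 1" using that fK by (auto simp: Kset_iff)
  qed
  have Bab: "Bf a b = e" unfolding Bf_def e_def a_def b_def by simp
  have lin1: "Bf (p *\<^sub>R x + q *\<^sub>R y) w = p * Bf x w + q * Bf y w" for p q x y w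
  proof -
    have e1: "f(i:=z, j:=w) = (f(j:=w))(i:=z)" for z using ij by (simp add: fun_upd_twist)
    show ?thesis unfolding Bf_def e1 by (rule mev_upd_lin[OF ij(1)])
  qed
  have lin2: "Bf w (p *\<^sub>R x + q *\<^sub>R y) = p * Bf w x + q * Bf w y" for p q x y w
    unfolding Bf_def by (rule mev_upd_lin[OF ij(2)])
  define W where "W w = (\<chi> k. mev S d ((f(j:=w))(i:=axis k 1)))" for w
  have BW: "Bf y w = y \<bullet> W w" for y w
  proof -
    have e1: "f(i:=y, j:=w) = (f(j:=w))(i:=y)" using ij by (simp add: fun_upd_twist)
    show ?thesis unfolding Bf_def e1 W_def by (rule mev_upd_inner[OF ij(1)])
  qed
  have Wb: "W b = e *\<^sub>R a"
  proof (rule FL[OF na(1) _ eM])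
    show "a \<bullet> W b = e" using Bab BW by simp
    show "\<bar>y \<bullet> W b\<bar> \<le> M" if "norm y = 1" for y using Bbd[OF that na(2)] BW by simp
  qed
  have Wa: "W a = e *\<^sub>R b"
  proof (rule FL[OF na(2) _ eM])
    show "b \<bullet> W a = e" using Bab BW Bsym by metis
    show "\<bar>y \<bullet> W a\<bar> \<le> M" if "norm y = 1" for y using Bbd[OF that na(1)] BW by simp
  qed
  have L1: "Bf y b = e * (a \<bullet> y)" for y using BW Wb by (simp add: inner_commute)
  have L2: "Bf y a = e * (b \<bullet> y)" for y using BW Wa by (simp add: inner_commute)
  have Baa: "Bf a a = e * c" using L2[of a] by (simp add: c_def inner_commute)
  have Bbb: "Bf b b = e * c" using L1[of b] by (simp add: c_def)
  have Bba: "Bf b a = e" using Bab Bsym by metis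
  define s where "s = norm (a + b)"
  define t where "t = norm (a - b)"
  have ss: "s * s = 2 + 2 * c"
    using norm_add_sq[of a b] na unfolding s_def c_def by (simp add: power2_eq_square)
  have tt: "t * t = 2 - 2 * c"
    using norm_diff_sq[of a b] na unfolding t_def c_def by (simp add: power2_eq_square)
  have cpos: "1 + c > 0" "1 - c > 0" using c1 by auto
  have s0: "s > 0"
  proof -
    have "s \<ge> 0" by (simp add: s_def)
    moreover have "s \<noteq> 0" using ss cpos by auto
    ultimately show ?thesis by simp
  qed
  have t0: "t > 0"
  proof -
    have "t \<ge> 0" by (simp add: t_def)
    moreover have "t \<noteq> 0" using tt cpos by auto
    ultimately show ?thesis by simp
  qed
  define u where "u = (1/s) *\<^sub>R a + (1/s) *\<^sub>R b"
  define v where "v = (1/t) *\<^sub>R a + (-1/t) *\<^sub>R b"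
  have u': "u = (1/s) *\<^sub>R (a + b)" by (simp add: u_def scaleR_add_right)
  have v': "v = (1/t) *\<^sub>R (a - b)" by (simp add: v_def scaleR_diff_right)
  have nu: "norm u = 1" using s0 unfolding u' by (simp add: s_def)
  have nv: "norm v = 1" using t0 unfolding v' by (simp add: t_def)
  have Buu: "Bf u u = e"
  proof -
    have "Bf u u = (1/s) * ((1/s) * Bf a a + (1/s) * Bf a b) + (1/s) * ((1/s) * Bf b a + (1/s) * Bf b b)"
      unfolding u_def lin1 lin2 by (simp add: algebra_simps)
    also have "\<dots> = e * (2 + 2 * c) / (s * s)" unfolding Baa Bab Bba Bbb using s0 by (simp add: field_simps)
    also have "\<dots> = e" using ss cpos by simp
    finally show ?thesis .
  qed
  have Bvv: "Bf v v = - e"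
  proof -
    have "Bf v v = (1/t) * ((1/t) * Bf a a + (-1/t) * Bf a b) + (-1/t) * ((1/t) * Bf b a + (-1/t) * Bf b b)"
      unfolding v_def lin1 lin2 by (simp add: algebra_simps)
    also have "\<dots> = - (e * (2 - 2 * c) / (t * t))" unfolding Baa Bab Bba Bbb using t0 by (simp add: field_simps)
    also have "\<dots> = - e" using tt cpos by simp
    finally show ?thesis .
  qed
  define gu where "gu = f(i:=u, j:=u)"
  define gv where "gv = f(i:=v, j:=v)"
  have guK: "gu \<in> Kset" using fK nu by (auto simp: Kset_iff gu_def)
  have gvK: "gv \<in> Kset" using fK nv by (auto simp: Kset_iff gv_def)
  have guM: "\<bar>mev S d gu\<bar> = spec_norm d S" using Buu eM unfolding gu_def Bf_def M_def by simp
  have gvM: "\<bar>mev S d gv\<bar> = spec_norm d S" using Bvv eM unfolding gv_def Bf_def M_def by simp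
  define X where "X p = Qm d gu (fst p) (snd p)" for p
  define Y where "Y p = Qm d gv (fst p) (snd p)" for p
  define Z where "Z p = Qm d f (fst p) (snd p)" for p
  have XY: "X p = Z p - (a $ fst p * a $ snd p + b $ fst p * b $ snd p) + 2 * (u $ fst p * u $ snd p)"
       "Y p = Z p - (a $ fst p * a $ snd p + b $ fst p * b $ snd p) + 2 * (v $ fst p * v $ snd p)" for p
    unfolding X_def Y_def Z_def gu_def gv_def a_def b_def Qm_upd2[OF ij] by simp_all
  have key: "(1 + c) * (u $ x * u $ y) + (1 - c) * (v $ x * v $ y) = a $ x * a $ y + b $ x * b $ y" for x y
  proof -
    have 1: "(1 + c) * (u $ x * u $ y) = (a $ x + b $ x) * (a $ y + b $ y) / 2"
    proof -
      have "(1 + c) * (u $ x * u $ y) = (1 + c) * ((a $ x + b $ x) * (a $ y + b $ y)) / (s * s)"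
        unfolding u' by simp
      also have "\<dots> = (a $ x + b $ x) * (a $ y + b $ y) / 2" unfolding ss using cpos by (simp add: field_simps)
      finally show ?thesis .
    qed
    have 2: "(1 - c) * (v $ x * v $ y) = (a $ x - b $ x) * (a $ y - b $ y) / 2"
    proof -
      have "(1 - c) * (v $ x * v $ y) = (1 - c) * ((a $ x - b $ x) * (a $ y - b $ y)) / (t * t)"
        unfolding v' by simp
      also have "\<dots> = (a $ x - b $ x) * (a $ y - b $ y) / 2" unfolding tt using cpos by (simp add: field_simps)
      finally show ?thesis .
    qed
    show ?thesis unfolding 1 2 by (simp add: field_simps)
  qed
  have Zc: "Z p = (1 + c) / 2 * X p + (1 - c) / 2 * Y p" for p
    unfolding XY using key[of "fst p" "snd p"] by (simp add: field_simps)
  have uv: "u \<bullet> v = 0"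
  proof -
    have "(a + b) \<bullet> (a - b) = a \<bullet> a - b \<bullet> b"
      by (simp add: inner_add_left inner_diff_right inner_commute algebra_simps)
    also have "\<dots> = (norm a)^2 - (norm b)^2" by (simp add: power2_norm_eq_inner)
    finally have "(a + b) \<bullet> (a - b) = 0" using na by simp
    then show ?thesis unfolding u' v' by simp
  qed
  have ne: "\<exists>p. X p \<noteq> Y p"
  proof (rule ccontr)
    assume "\<not> (\<exists>p. X p \<noteq> Y p)"
    then have eq: "u $ x * u $ y = v $ x * v $ y" for x y
      using XY[of "(x, y)"] by auto
    have "v $ x = 0" for x
    proof -
      have "(\<Sum>y\<in>UNIV. u $ x * u $ y * v $ y) = (\<Sum>y\<in>UNIV. v $ x * v $ y * v $ y)"
        using eq by simp
      then have "u $ x * (u \<bullet> v) = v $ x * (v \<bullet> v)"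
        by (simp add: inner_vec_def sum_distrib_left mult.assoc)
      then show ?thesis using uv nv by (simp add: power2_norm_eq_inner[symmetric])
    qed
    then have "v = 0" by (simp add: vec_eq_iff)
    then show False using nv by simp
  qed
  then obtain p0 where p0: "X p0 \<noteq> Y p0" by blast
  have "(\<Sum>p\<in>UNIV. (Z p)^2) < max (\<Sum>p\<in>UNIV. (X p)^2) (\<Sum>p\<in>UNIV. (Y p)^2)"
    by (rule psi_convex[of "(1 + c) / 2" "(1 - c) / 2" Z X Y p0]) (use cpos Zc p0 in \<open>auto simp: field_simps\<close>)
  then have "Psi d f < max (Psi d gu) (Psi d gv)"
    unfolding Psi_def X_def Y_def Z_def .
  then show ?thesis using guK gvK guM gvM by (metis max_def)
qed
lemma banach:
  fixes S :: "'n::finite list \<Rightarrow> real"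
  assumes S: "symmetric_tensor d S" and d: "d \<ge> 1"
  shows "\<exists>x. norm x = 1 \<and> spec_norm d S = \<bar>tinner d S (tpow d x)\<bar>"
proof -
  define M where "M = spec_norm d S"
  define e0 :: "real^'n" where "e0 = axis undefined 1"
  have ne0: "norm e0 = 1" by (simp add: e0_def)
  have Kne: "(Kset :: (nat \<Rightarrow> real^'n) set) \<noteq> {}"
  proof -
    have "(\<lambda>_. e0) \<in> Kset" using ne0 by (simp add: Kset_iff)
    then show ?thesis by blast
  qed
  have cabs: "continuous_on Kset (\<lambda>f::nat \<Rightarrow> real^'n. \<bar>mev S d f\<bar>)"
    by (intro continuous_on_rabs continuous_on_subset[OF cont_mev subset_UNIV])
  obtain f0 where f0: "f0 \<in> Kset" "\<forall>f\<in>Kset. \<bar>mev S d f\<bar> \<le> \<bar>mev S d f0\<bar>"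
    using continuous_attains_sup[OF Kset_compact Kne cabs] by blast
  have f0M: "\<bar>mev S d f0\<bar> = M"
  proof (rule antisym)
    show "\<bar>mev S d f0\<bar> \<le> M" unfolding M_def by (rule spec_ge) (use f0(1) in \<open>auto simp: Kset_iff\<close>)
    show "M \<le> \<bar>mev S d f0\<bar>" unfolding M_def
    proof (rule spec_le)
      fix f :: "nat \<Rightarrow> real^'n" assume f: "\<forall>j<d. norm (f j) = 1"
      define f' where "f' j = (if j < d then f j else e0)" for j
      have "f' \<in> Kset" using f ne0 by (auto simp: Kset_iff f'_def)
      moreover have "mev S d f = mev S d f'" by (rule mev_cong) (simp add: f'_def)
      ultimately show "\<bar>mev S d f\<bar> \<le> \<bar>mev S d f0\<bar>" using f0(2) by simp
    qed
  qed
  define Km where "Km = Kset \<inter> {f::nat \<Rightarrow> real^'n. \<bar>mev S d f\<bar> = M}"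
  have cab: "continuous_on UNIV (\<lambda>f::nat \<Rightarrow> real^'n. \<bar>mev S d f\<bar>)"
    by (intro continuous_on_rabs cont_mev)
  have "closed {f::nat \<Rightarrow> real^'n. \<bar>mev S d f\<bar> = M}"
    by (rule closed_Collect_eq[OF cab continuous_on_const])
  then have Kmc: "compact Km" unfolding Km_def using Kset_compact by (rule compact_Int_closed[rotated])
  have Kmne: "Km \<noteq> {}" using f0 f0M by (auto simp: Km_def)
  obtain f1 where f1: "f1 \<in> Km" "\<forall>f\<in>Km. Psi d f \<le> Psi d f1"
    using continuous_attains_sup[OF Kmc Kmne continuous_on_subset[OF cont_Psi subset_UNIV]] by blast
  have f1K: "f1 \<in> Kset" and f1M: "\<bar>mev S d f1\<bar> = M" using f1(1) by (auto simp: Km_def)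
  have unit_inner: "x \<bullet> x = 1" if "norm x = 1" for x :: "real^'n"
    using that power2_norm_eq_inner[of x] by simp
  have all1: "\<bar>f1 i \<bullet> f1 j\<bar> = 1" if ij: "i < d" "j < d" for i j
  proof (rule ccontr)
    assume ne: "\<bar>f1 i \<bullet> f1 j\<bar> \<noteq> 1"
    have ni: "norm (f1 i) = 1" "norm (f1 j) = 1" using f1K by (auto simp: Kset_iff)
    have "\<bar>f1 i \<bullet> f1 j\<bar> \<le> 1" using Cauchy_Schwarz_ineq2[of "f1 i" "f1 j"] ni by simp
    with ne have lt: "\<bar>f1 i \<bullet> f1 j\<bar> < 1" by simp
    have "i \<noteq> j"
    proof
      assume "i = j"
      then show False using ne unit_inner[OF ni(1)] by simp
    qed
    obtain g where g: "g \<in> Kset" "\<bar>mev S d g\<bar> = spec_norm d S" "Psi d g > Psi d f1"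
      using pair_step[OF S f1K _ ij \<open>i \<noteq> j\<close> lt] f1M M_def by auto
    then have "g \<in> Km" by (simp add: Km_def M_def)
    then have "Psi d g \<le> Psi d f1" using f1(2) by blast
    then show False using g(3) by simp
  qed
  define x0 where "x0 = f1 0"
  have nx0: "norm x0 = 1" using f1K by (simp add: Kset_iff x0_def)
  define sg where "sg k = x0 \<bullet> f1 k" for k
  have sg1: "\<bar>sg k\<bar> = 1" if "k < d" for k using all1[of 0 k] d that by (simp add: sg_def x0_def)
  have fk: "f1 k = sg k *\<^sub>R x0" if "k < d" for k
  proof -
    have nk: "norm (f1 k) = 1" using f1K by (simp add: Kset_iff)
    have "(norm (f1 k - sg k *\<^sub>R x0))^2 = (norm (f1 k))^2 - 2 * sg k * (x0 \<bullet> f1 k) + (sg k)^2 * (norm x0)^2"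
      by (simp only: power2_norm_eq_inner) (simp add: inner_diff_left inner_diff_right inner_commute algebra_simps power2_eq_square)
    also have "\<dots> = 1 - (sg k)^2" using nk nx0 by (simp add: sg_def power2_eq_square)
    also have "\<dots> = 0"
    proof -
      have "(sg k)^2 = \<bar>sg k\<bar>^2" by simp
      then show ?thesis using sg1[OF that] by simp
    qed
    finally show ?thesis by simp
  qed
  have "mev S d f1 = (\<Prod>k<d. sg k) * mev S d (\<lambda>_. x0)"
  proof -
    have "mprod d f1 ks = (\<Prod>k<d. sg k) * mprod d (\<lambda>_. x0) ks" for ks
    proof -
      have "mprod d f1 ks = (\<Prod>k<d. sg k * x0 $ (ks ! k))"
        unfolding mprod_def by (intro prod.cong) (simp_all add: fk)
      then show ?thesis by (simp add: prod.distrib mprod_def)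
    qed
    then show ?thesis unfolding mev_def by (simp add: sum_distrib_left mult_ac)
  qed
  moreover have "\<bar>\<Prod>k<d. sg k\<bar> = 1" unfolding abs_prod using sg1 by (intro prod.neutral) simp
  ultimately have "M = \<bar>mev S d (\<lambda>_. x0)\<bar>" using f1M by (simp add: abs_mult)
  then show ?thesis using nx0 unfolding M_def by (intro exI[of _ x0]) (simp add: tinner_tpow)
qed

lemma symmetric_zero: "symmetric_tensor d (\<lambda>_. 0)"
  by (simp add: symmetric_tensor_def is_tensor_def)

lemma tinner_tpow_scale: "tinner p (\<lambda>ks. a * tpow p c ks) (tpow p x) = a * (c \<bullet> x) ^ p"
  by (simp add: tinner_scale_left tinner_tpow_tpow)

lemma repr_iff:
  assumes F: "symmetric_tensor p F"
  shows "(\<forall>x. tinner p F (tpow p x) = a * (c \<bullet> x) ^ p) \<longleftrightarrow> F = (\<lambda>ks. a * tpow p c ks)"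
proof
  assume h: "\<forall>x. tinner p F (tpow p x) = a * (c \<bullet> x) ^ p"
  show "F = (\<lambda>ks. a * tpow p c ks)"
    using h by (intro sym_eq[OF F symmetric_scale[OF tpow_symmetric]]) (simp add: tinner_tpow_scale)
qed (simp add: tinner_tpow_scale)

lemma zero_iff:
  assumes F: "symmetric_tensor p F"
  shows "(\<lambda>x. tinner p F (tpow p x)) = (\<lambda>_. 0) \<longleftrightarrow> F = (\<lambda>_. 0)"
proof
  assume "(\<lambda>x. tinner p F (tpow p x)) = (\<lambda>_. 0)"
  then show "F = (\<lambda>_. 0)" by (intro sym_zero[OF F]) (metis)
qed (simp add: tinner_def)

lemma ttensor_zero1: "ttensor p q (\<lambda>_. 0) G = (\<lambda>_. 0)"
  by (simp add: ttensor_def fun_eq_iff)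

lemma ttensor_zero2: "ttensor p q F (\<lambda>_. 0) = (\<lambda>_. 0)"
  by (simp add: ttensor_def fun_eq_iff)

lemma ttensor_rank1:
  "ttensor p q (\<lambda>ks. a * tpow p c ks) (\<lambda>ks. b * tpow q c ks) = (\<lambda>ks. (a * b) * tpow (p+q) c ks)"
  by (simp add: tpow_split ttensor_def fun_eq_iff)

lemma hs_scale: "hs_norm d (\<lambda>ks. a * A ks) = \<bar>a\<bar> * hs_norm d A"
proof -
  have "tinner d (\<lambda>ks. a * A ks) (\<lambda>ks. a * A ks) = a^2 * tinner d A A"
    unfolding tinner_def by (simp add: sum_distrib_left power2_eq_square mult_ac)
  then show ?thesis by (simp add: hs_norm_def real_sqrt_mult)
qed

lemma part_e:
  assumes F: "symmetric_tensor p F" and G: "symmetric_tensor q G" and p: "p \<ge> 1" and q: "q \<ge> 1"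
  shows "hs_norm (p + q) (sym_tensor_prod p q F G) \<le> hs_norm p F * hs_norm q G \<and>
       (hs_norm (p + q) (sym_tensor_prod p q F G) = hs_norm p F * hs_norm q G \<longleftrightarrow>
          F = (\<lambda>_. 0) \<or> G = (\<lambda>_. 0) \<or>
          (\<exists>c a b. c \<noteq> 0 \<and> a \<noteq> 0 \<and> b \<noteq> 0 \<and>
             F = (\<lambda>ks. a * tpow p c ks) \<and> G = (\<lambda>ks. b * tpow q c ks)))"
proof -
  let ?H = "ttensor p q F G"
  have h: "hs_norm (p+q) (tsym (p+q) ?H) \<le> hs_norm (p+q) ?H \<and>
    (hs_norm (p+q) (tsym (p+q) ?H) = hs_norm (p+q) ?H \<longleftrightarrow> tsym (p+q) ?H = ?H)"
    by (rule hs_tsym[OF is_tensor_ttensor])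
  have e: "tsym (p+q) ?H = ?H \<longleftrightarrow> F = (\<lambda>_. 0) \<or> G = (\<lambda>_. 0) \<or>
          (\<exists>c a b. c \<noteq> 0 \<and> a \<noteq> 0 \<and> b \<noteq> 0 \<and>
             F = (\<lambda>ks. a * tpow p c ks) \<and> G = (\<lambda>ks. b * tpow q c ks))"
  proof
    assume s: "tsym (p+q) ?H = ?H"
    show "F = (\<lambda>_. 0) \<or> G = (\<lambda>_. 0) \<or>
          (\<exists>c a b. c \<noteq> 0 \<and> a \<noteq> 0 \<and> b \<noteq> 0 \<and>
             F = (\<lambda>ks. a * tpow p c ks) \<and> G = (\<lambda>ks. b * tpow q c ks))"
    proof (cases "F = (\<lambda>_. 0) \<or> G = (\<lambda>_. 0)")
      case False
      have "symmetric_tensor (p+q) ?H" using tsym_symmetric[of "p+q" ?H] s by simp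
      then show ?thesis using rank1_main[OF F G p q _ _] False by blast
    qed blast
  next
    assume r: "F = (\<lambda>_. 0) \<or> G = (\<lambda>_. 0) \<or>
          (\<exists>c a b. c \<noteq> 0 \<and> a \<noteq> 0 \<and> b \<noteq> 0 \<and>
             F = (\<lambda>ks. a * tpow p c ks) \<and> G = (\<lambda>ks. b * tpow q c ks))"
    have "symmetric_tensor (p+q) ?H"
      using r by (auto simp: ttensor_zero1 ttensor_zero2 symmetric_zero ttensor_rank1
          intro!: symmetric_scale tpow_symmetric)
    then show "tsym (p+q) ?H = ?H" by (rule tsym_of_symmetric)
  qed
  show ?thesis using h e unfolding sym_tensor_prod_eq hs_ttensor by simp
qed

lemma hs_cs_part:
  assumes F: "symmetric_tensor p F"
  shows "\<bar>tinner p F (tpow p c)\<bar> \<le> hs_norm p F * norm c ^ p \<and>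
    (c \<noteq> 0 \<longrightarrow> (\<bar>tinner p F (tpow p c)\<bar> = hs_norm p F * norm c ^ p \<longleftrightarrow>
        (\<exists>a. \<forall>x. tinner p F (tpow p x) = a * (c \<bullet> x) ^ p)))"
proof -
  have le: "\<bar>tinner p F (tpow p c)\<bar> \<le> hs_norm p F * norm c ^ p"
    using abs_tinner_le[of p F "tpow p c"] by (simp add: hs_tpow)
  have eq: "\<bar>tinner p F (tpow p c)\<bar> = hs_norm p F * norm c ^ p \<longleftrightarrow>
        (\<exists>a. \<forall>x. tinner p F (tpow p x) = a * (c \<bullet> x) ^ p)" if c0: "c \<noteq> 0"
  proof
    assume h: "\<bar>tinner p F (tpow p c)\<bar> = hs_norm p F * norm c ^ p"
    have BB: "tinner p (tpow p c) (tpow p c) \<noteq> 0" using c0 by (simp add: tinner_tpow_tpow)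
    define a where "a = tinner p F (tpow p c) / tinner p (tpow p c) (tpow p c)"
    have "\<forall>ks\<in>idx p. F ks = a * tpow p c ks"
      unfolding a_def by (rule cs_eq[OF BB]) (simp add: h hs_tpow)
    then have "F = (\<lambda>ks. a * tpow p c ks)"
      using F by (auto simp: fun_eq_iff symmetric_tensor_def is_tensor_def tpow_eq)
    then show "\<exists>a. \<forall>x. tinner p F (tpow p x) = a * (c \<bullet> x) ^ p"
      using repr_iff[OF F] by blast
  next
    assume "\<exists>a. \<forall>x. tinner p F (tpow p x) = a * (c \<bullet> x) ^ p"
    then obtain a where "\<forall>x. tinner p F (tpow p x) = a * (c \<bullet> x) ^ p" by blast
    then have Fa: "F = (\<lambda>ks. a * tpow p c ks)" using repr_iff[OF F] by blast
    have "\<bar>tinner p F (tpow p c)\<bar> = \<bar>a\<bar> * (hs_norm p (tpow p c))^2"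
      unfolding Fa tinner_scale_left by (simp add: hs_norm_def tinner_self_nonneg abs_mult)
    also have "\<dots> = hs_norm p F * norm c ^ p"
      unfolding Fa hs_scale by (simp add: hs_tpow power2_eq_square)
    finally show "\<bar>tinner p F (tpow p c)\<bar> = hs_norm p F * norm c ^ p" .
  qed
  show ?thesis using le eq by blast
qed

lemma sigma_char:
  assumes S: "symmetric_tensor d S" and d: "d \<ge> 1"
  shows "(\<forall>x. norm x = 1 \<longrightarrow> \<bar>tinner d S (tpow d x)\<bar> \<le> spec_norm d S) \<and>
         (\<exists>x. norm x = 1 \<and> spec_norm d S = \<bar>tinner d S (tpow d x)\<bar>)"
  using spec_tpow_ge banach[OF S d] by blast

lemma pow_rep:
  assumes F: "symmetric_tensor p F"
  shows "k \<ge> 1 \<Longrightarrow> \<exists>P. symmetric_tensor (k * p) P \<and> (\<forall>x. tinner (k * p) P (tpow (k * p) x) = (tinner p F (tpow p x)) ^ k)"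
proof (induction k)
  case 0 then show ?case by simp
next
  case (Suc k)
  show ?case
  proof (cases "k = 0")
    case True then show ?thesis using F by (intro exI[of _ F]) simp
  next
    case False
    then obtain P where P: "symmetric_tensor (k * p) P" "\<forall>x. tinner (k * p) P (tpow (k * p) x) = (tinner p F (tpow p x)) ^ k"
      using Suc by auto
    let ?P = "tsym (k * p + p) (ttensor (k * p) p P F)"
    have "symmetric_tensor (Suc k * p) ?P" using tsym_symmetric by (simp add: add.commute)
    moreover have "\<forall>x. tinner (Suc k * p) ?P (tpow (Suc k * p) x) = (tinner p F (tpow p x)) ^ Suc k"
    proof
      fix x
      have "tinner (k * p + p) ?P (tpow (k * p + p) x) = (tinner p F (tpow p x)) ^ k * tinner p F (tpow p x)"
        by (simp only: tinner_tsym_ttensor_tpow P(2))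
      then show "tinner (Suc k * p) ?P (tpow (Suc k * p) x) = (tinner p F (tpow p x)) ^ Suc k"
        by (simp add: add.commute mult.commute)
    qed
    ultimately show ?thesis by blast
  qed
qed

theorem lemma2p1:
  fixes T F G :: "'n::finite list \<Rightarrow> real" and d p q :: nat
  assumes "d \<ge> 1" and "p \<ge> 1" and "q \<ge> 1"
    and T: "is_tensor d T"
    and F: "symmetric_tensor p F" and G: "symmetric_tensor q G"
  defines "f \<equiv> (\<lambda>x. tinner p F (tpow p x))"
    and "g \<equiv> (\<lambda>x. tinner q G (tpow q x))"
  shows
   "(hs_norm d (tsym d T) \<le> hs_norm d T \<and>
       (hs_norm d (tsym d T) = hs_norm d T \<longleftrightarrow> tsym d T = T))
    \<and> (\<forall>x. tinner d T (tpow d x) = tinner d (tsym d T) (tpow d x))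
    \<and> (spec_norm d (tsym d T) \<le> spec_norm d T \<and>
       (spec_norm d (tsym d T) = spec_norm d T \<longleftrightarrow>
          (\<exists>x. norm x = 1 \<and> spec_norm d T = \<bar>tinner d T (tpow d x)\<bar>)))
    \<and> sym_tensor_prod p q F G = tsym (p + q) (ttensor p q F G)
    \<and> (hs_norm (p + q) (sym_tensor_prod p q F G) \<le> hs_norm p F * hs_norm q G \<and>
       (hs_norm (p + q) (sym_tensor_prod p q F G) = hs_norm p F * hs_norm q G \<longleftrightarrow>
          F = (\<lambda>_. 0) \<or> G = (\<lambda>_. 0) \<or>
          (\<exists>c a b. c \<noteq> 0 \<and> a \<noteq> 0 \<and> b \<noteq> 0 \<and>
             F = (\<lambda>is. a * tpow p c is) \<and> G = (\<lambda>is. b * tpow q c is))))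
    \<and> (\<forall>c. \<bar>f c\<bar> \<le> poly_hs p f * norm c ^ p \<and>
          (c \<noteq> 0 \<longrightarrow> (\<bar>f c\<bar> = poly_hs p f * norm c ^ p \<longleftrightarrow>
              (\<exists>a. \<forall>x. f x = a * (c \<bullet> x) ^ p))))
    \<and> (poly_hs (p + q) (\<lambda>x. f x * g x) \<le> poly_hs p f * poly_hs q g \<and>
       (poly_hs (p + q) (\<lambda>x. f x * g x) = poly_hs p f * poly_hs q g \<longleftrightarrow>
          f = (\<lambda>_. 0) \<or> g = (\<lambda>_. 0) \<or>
          (\<exists>c a b. c \<noteq> 0 \<and> a \<noteq> 0 \<and> b \<noteq> 0 \<and>
             (\<forall>x. f x = a * (c \<bullet> x) ^ p) \<and> (\<forall>x. g x = b * (c \<bullet> x) ^ q))))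
    \<and> (poly_sigma (p + q) (\<lambda>x. f x * g x) \<le> poly_sigma p f * poly_sigma q g \<and>
       (poly_sigma (p + q) (\<lambda>x. f x * g x) = poly_sigma p f * poly_sigma q g \<longleftrightarrow>
          (\<exists>x. norm x = 1 \<and> \<bar>f x\<bar> = poly_sigma p f \<and> \<bar>g x\<bar> = poly_sigma q g)))
    \<and> (\<forall>k::nat. k \<ge> 1 \<longrightarrow> poly_sigma (k * p) (\<lambda>x. f x ^ k) = poly_sigma p f ^ k)"
proof -
  have p1: "p + q \<ge> 1" using assms(2) by simp
  have Ap: "hs_norm d (tsym d T) \<le> hs_norm d T \<and>
       (hs_norm d (tsym d T) = hs_norm d T \<longleftrightarrow> tsym d T = T)" by (rule hs_tsym[OF T])
  have Bp: "\<forall>x. tinner d T (tpow d x) = tinner d (tsym d T) (tpow d x)"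
    by (simp add: tinner_tsym_tpow)
  have Cp: "spec_norm d (tsym d T) \<le> spec_norm d T \<and>
       (spec_norm d (tsym d T) = spec_norm d T \<longleftrightarrow>
          (\<exists>x. norm x = 1 \<and> spec_norm d T = \<bar>tinner d T (tpow d x)\<bar>))"
  proof -
    have le: "spec_norm d (tsym d T) \<le> spec_norm d T" by (rule spec_tsym_le)
    have "spec_norm d (tsym d T) = spec_norm d T \<longleftrightarrow>
          (\<exists>x. norm x = 1 \<and> spec_norm d T = \<bar>tinner d T (tpow d x)\<bar>)"
    proof
      assume eq: "spec_norm d (tsym d T) = spec_norm d T"
      obtain x where x: "norm x = 1" "spec_norm d (tsym d T) = \<bar>tinner d (tsym d T) (tpow d x)\<bar>"
        using banach[OF tsym_symmetric assms(1)] by blast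
      then show "\<exists>x. norm x = 1 \<and> spec_norm d T = \<bar>tinner d T (tpow d x)\<bar>"
        using eq by (intro exI[of _ x]) (simp add: tinner_tsym_tpow)
    next
      assume "\<exists>x. norm x = 1 \<and> spec_norm d T = \<bar>tinner d T (tpow d x)\<bar>"
      then obtain x where x: "norm x = 1" "spec_norm d T = \<bar>tinner d T (tpow d x)\<bar>" by blast
      have "\<bar>tinner d (tsym d T) (tpow d x)\<bar> \<le> spec_norm d (tsym d T)" by (rule spec_tpow_ge[OF x(1)])
      then have "spec_norm d T \<le> spec_norm d (tsym d T)" using x(2) by (simp add: tinner_tsym_tpow)
      then show "spec_norm d (tsym d T) = spec_norm d T" using le by simp
    qed
    then show ?thesis using le by simp
  qed
  have Dp: "sym_tensor_prod p q F G = tsym (p + q) (ttensor p q F G)" by (rule sym_tensor_prod_eq)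
  have Ep: "hs_norm (p + q) (sym_tensor_prod p q F G) \<le> hs_norm p F * hs_norm q G \<and>
       (hs_norm (p + q) (sym_tensor_prod p q F G) = hs_norm p F * hs_norm q G \<longleftrightarrow>
          F = (\<lambda>_. 0) \<or> G = (\<lambda>_. 0) \<or>
          (\<exists>c a b. c \<noteq> 0 \<and> a \<noteq> 0 \<and> b \<noteq> 0 \<and>
             F = (\<lambda>is. a * tpow p c is) \<and> G = (\<lambda>is. b * tpow q c is)))"
    by (rule part_e[OF F G assms(2) assms(3)])
  have PF: "poly_tensor p f = F" by (rule poly_tensor_eq[OF F]) (simp add: f_def)
  have PG: "poly_tensor q g = G" by (rule poly_tensor_eq[OF G]) (simp add: g_def)
  have fg_rep: "f x * g x = tinner (p+q) (tsym (p+q) (ttensor p q F G)) (tpow (p+q) x)" for x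
    by (simp add: f_def g_def tinner_tsym_ttensor_tpow)
  have PFG: "poly_tensor (p+q) (\<lambda>x. f x * g x) = tsym (p+q) (ttensor p q F G)"
    by (rule poly_tensor_eq[OF tsym_symmetric]) (rule fg_rep)
  have F1: "\<forall>c. \<bar>f c\<bar> \<le> poly_hs p f * norm c ^ p \<and>
          (c \<noteq> 0 \<longrightarrow> (\<bar>f c\<bar> = poly_hs p f * norm c ^ p \<longleftrightarrow>
              (\<exists>a. \<forall>x. f x = a * (c \<bullet> x) ^ p)))"
    unfolding poly_hs_def PF using hs_cs_part[OF F] by (simp add: f_def)
  have f0: "f = (\<lambda>_. 0) \<longleftrightarrow> F = (\<lambda>_. 0)" unfolding f_def by (rule zero_iff[OF F])
  have g0: "g = (\<lambda>_. 0) \<longleftrightarrow> G = (\<lambda>_. 0)" unfolding g_def by (rule zero_iff[OF G])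
  have fr: "(\<forall>x. f x = a * (c \<bullet> x) ^ p) \<longleftrightarrow> F = (\<lambda>is. a * tpow p c is)" for a c
    unfolding f_def using repr_iff[OF F] by simp
  have gr: "(\<forall>x. g x = b * (c \<bullet> x) ^ q) \<longleftrightarrow> G = (\<lambda>is. b * tpow q c is)" for b c
    unfolding g_def using repr_iff[OF G] by simp
  have F2: "poly_hs (p + q) (\<lambda>x. f x * g x) \<le> poly_hs p f * poly_hs q g \<and>
       (poly_hs (p + q) (\<lambda>x. f x * g x) = poly_hs p f * poly_hs q g \<longleftrightarrow>
          f = (\<lambda>_. 0) \<or> g = (\<lambda>_. 0) \<or>
          (\<exists>c a b. c \<noteq> 0 \<and> a \<noteq> 0 \<and> b \<noteq> 0 \<and>
             (\<forall>x. f x = a * (c \<bullet> x) ^ p) \<and> (\<forall>x. g x = b * (c \<bullet> x) ^ q)))"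
    unfolding poly_hs_def PF PG PFG Dp[symmetric] f0 g0 fr gr by (rule Ep)
  let ?P = "tsym (p+q) (ttensor p q F G)"
  have sF: "(\<forall>x. norm x = 1 \<longrightarrow> \<bar>f x\<bar> \<le> poly_sigma p f) \<and> (\<exists>x. norm x = 1 \<and> poly_sigma p f = \<bar>f x\<bar>)"
    unfolding poly_sigma_def PF unfolding f_def by (rule sigma_char[OF F assms(2)])
  have sG: "(\<forall>x. norm x = 1 \<longrightarrow> \<bar>g x\<bar> \<le> poly_sigma q g) \<and> (\<exists>x. norm x = 1 \<and> poly_sigma q g = \<bar>g x\<bar>)"
    unfolding poly_sigma_def PG unfolding g_def by (rule sigma_char[OF G assms(3)])
  have sP: "(\<forall>x. norm x = 1 \<longrightarrow> \<bar>f x * g x\<bar> \<le> poly_sigma (p+q) (\<lambda>x. f x * g x)) \<and>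
      (\<exists>x. norm x = 1 \<and> poly_sigma (p+q) (\<lambda>x. f x * g x) = \<bar>f x * g x\<bar>)"
    unfolding poly_sigma_def PFG unfolding fg_rep by (rule sigma_char[OF tsym_symmetric p1])
  have F3: "poly_sigma (p + q) (\<lambda>x. f x * g x) \<le> poly_sigma p f * poly_sigma q g \<and>
       (poly_sigma (p + q) (\<lambda>x. f x * g x) = poly_sigma p f * poly_sigma q g \<longleftrightarrow>
          (\<exists>x. norm x = 1 \<and> \<bar>f x\<bar> = poly_sigma p f \<and> \<bar>g x\<bar> = poly_sigma q g))"
  proof -
    define sf where "sf = poly_sigma p f"
    define sg where "sg = poly_sigma q g"
    define sp where "sp = poly_sigma (p + q) (\<lambda>x. f x * g x)"
    have bf: "\<And>x. norm x = 1 \<Longrightarrow> \<bar>f x\<bar> \<le> sf" using sF by (simp add: sf_def)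
    have bg: "\<And>x. norm x = 1 \<Longrightarrow> \<bar>g x\<bar> \<le> sg" using sG by (simp add: sg_def)
    have bp: "\<And>x. norm x = 1 \<Longrightarrow> \<bar>f x\<bar> * \<bar>g x\<bar> \<le> sp" using sP by (simp add: sp_def abs_mult)
    obtain xf where xf: "norm xf = 1" "sf = \<bar>f xf\<bar>" using sF by (auto simp: sf_def)
    obtain xg where xg: "norm xg = 1" "sg = \<bar>g xg\<bar>" using sG by (auto simp: sg_def)
    obtain xp where xp: "norm xp = 1" "sp = \<bar>f xp\<bar> * \<bar>g xp\<bar>" using sP by (auto simp: sp_def abs_mult)
    have sf0: "sf \<ge> 0" using xf by simp
    have sg0: "sg \<ge> 0" using xg by simp
    have le: "sp \<le> sf * sg" unfolding xp(2) using bf[OF xp(1)] bg[OF xp(1)] by (simp add: mult_mono)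
    have "sp = sf * sg \<longleftrightarrow> (\<exists>x. norm x = 1 \<and> \<bar>f x\<bar> = sf \<and> \<bar>g x\<bar> = sg)"
    proof
      assume eq: "sp = sf * sg"
      show "\<exists>x. norm x = 1 \<and> \<bar>f x\<bar> = sf \<and> \<bar>g x\<bar> = sg"
      proof (cases "sf = 0")
        case True
        then show ?thesis using xg bf[OF xg(1)] by (intro exI[of _ xg]) auto
      next
        case sfn: False
        show ?thesis
        proof (cases "sg = 0")
          case True
          then show ?thesis using xf bg[OF xf(1)] by (intro exI[of _ xf]) auto
        next
          case sgn: False
          have pf: "sf > 0" "sg > 0" using sfn sgn sf0 sg0 by auto
          have a1: "\<bar>f xp\<bar> \<le> sf" "\<bar>g xp\<bar> \<le> sg" using bf[OF xp(1)] bg[OF xp(1)] by auto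
          have e1: "\<bar>f xp\<bar> * \<bar>g xp\<bar> = sf * sg" using eq xp(2) by simp
          have "\<bar>f xp\<bar> = sf"
          proof (rule ccontr)
            assume "\<bar>f xp\<bar> \<noteq> sf"
            then have "\<bar>f xp\<bar> < sf" using a1 by simp
            then have "\<bar>f xp\<bar> * \<bar>g xp\<bar> < sf * sg"
              using a1 pf by (smt (verit) abs_ge_zero mult_le_cancel_left mult_strict_right_mono)
            then show False using e1 by simp
          qed
          moreover have "\<bar>g xp\<bar> = sg"
          proof (rule ccontr)
            assume "\<bar>g xp\<bar> \<noteq> sg"
            then have "\<bar>g xp\<bar> < sg" using a1 by simp
            then have "\<bar>f xp\<bar> * \<bar>g xp\<bar> < sf * sg"
              using a1 pf by (smt (verit) abs_ge_zero mult_le_cancel_right mult_strict_left_mono)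
            then show False using e1 by simp
          qed
          ultimately show ?thesis using xp(1) by blast
        qed
      qed
    next
      assume "\<exists>x. norm x = 1 \<and> \<bar>f x\<bar> = sf \<and> \<bar>g x\<bar> = sg"
      then obtain x where x: "norm x = 1" "\<bar>f x\<bar> = sf" "\<bar>g x\<bar> = sg" by blast
      have "sf * sg \<le> sp" using bp[OF x(1)] x by simp
      then show "sp = sf * sg" using le by simp
    qed
    then show ?thesis using le unfolding sf_def sg_def sp_def by simp
  qed
  have F4: "\<forall>k::nat. k \<ge> 1 \<longrightarrow> poly_sigma (k * p) (\<lambda>x. f x ^ k) = poly_sigma p f ^ k"
  proof (intro allI impI)
    fix k :: nat assume k: "k \<ge> 1"
    obtain P where P: "symmetric_tensor (k * p) P" "\<forall>x. tinner (k * p) P (tpow (k * p) x) = (tinner p F (tpow p x)) ^ k"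
      using pow_rep[OF F k] by blast
    have kp: "k * p \<ge> 1" using k assms(2) by simp
    have PP: "poly_tensor (k * p) (\<lambda>x. f x ^ k) = P"
      by (rule poly_tensor_eq[OF P(1)]) (simp add: P(2) f_def)
    have sPk: "(\<forall>x. norm x = 1 \<longrightarrow> \<bar>f x ^ k\<bar> \<le> poly_sigma (k * p) (\<lambda>x. f x ^ k)) \<and>
      (\<exists>x. norm x = 1 \<and> poly_sigma (k * p) (\<lambda>x. f x ^ k) = \<bar>f x ^ k\<bar>)"
      unfolding poly_sigma_def PP using sigma_char[OF P(1) kp] by (simp add: P(2) f_def)
    obtain x1 where x1: "norm x1 = 1" "poly_sigma (k * p) (\<lambda>x. f x ^ k) = \<bar>f x1\<bar> ^ k"
      using sPk by (auto simp: power_abs)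
    obtain x2 where x2: "norm x2 = 1" "poly_sigma p f = \<bar>f x2\<bar>" using sF by auto
    have "\<bar>f x1\<bar> ^ k \<le> poly_sigma p f ^ k" using sF x1(1) by (intro power_mono) auto
    moreover have "\<bar>f x2\<bar> ^ k \<le> poly_sigma (k * p) (\<lambda>x. f x ^ k)" using sPk x2(1) by (auto simp: power_abs)
    ultimately show "poly_sigma (k * p) (\<lambda>x. f x ^ k) = poly_sigma p f ^ k" using x1(2) x2(2) by simp
  qed
  show ?thesis using Ap Bp Cp Dp Ep F1 F2 F3 F4 by blast
qed

end
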